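(* Let $|\Psi_n\rangle\in\mathcal H^{\otimes n}$ be a permutation-invariant unit vector (i.e. $P_\pi|\Psi_n\rangle=|\Psi_n\rangle$ for all $\pi\in S_n$) and let $|\theta\rangle\in\mathcal H$ be a unit vector with $\langle\Psi_n|\theta^{\otimes n}\rangle\neq0$. Then for every $m\le n$ there is a unit vector $|\Psi_{n,m}\rangle\in\mathcal H^{\otimes n-m}$ such that $$|\Psi_{n,m}\rangle\langle\Psi_{n,m}|\le|\langle\Psi_n|\theta^{\otimes n}\rangle|^{-2}\,\mathrm{tr}_{1,\dots,m}(|\Psi_n\rangle\langle\Psi_n|),$$ and for every $r\le n-m$ there is an almost power state $|\Psi_{n,m,r}\rangle\in|\theta\rangle^{[\otimes,n-m,r]}$ (a unit vector) with $$\big\||\Psi_{n,m}\rangle\langle\Psi_{n,m}|-|\Psi_{n,m,r}\rangle\langle\Psi_{n,m,r}|\big\|_1\le2\sqrt2\,|\langle\Psi_n|\theta^{\otimes n}\rangle|^{-1}e^{-\frac{mr}{2n}}.$$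
   Context: $\mathcal H$ is a finite-dimensional Hilbert space; $P_\pi$ ($\pi\in S_n$) permutes the tensor factors of $\mathcal H^{\otimes n}$; $\mathrm{Sym}(\mathcal H^{\otimes n})$ is the symmetric subspace (vectors invariant under all $P_\pi$); $\mathrm{tr}_{1,\dots,m}$ is the partial trace over the first $m$ tensor factors. For a unit vector $|\theta\rangle\in\mathcal H$ and $0\le r\le n$, let $\mathcal V(\mathcal H^{\otimes n},|\theta\rangle^{\otimes n-r})=\{P_\pi(|\theta\rangle^{\otimes n-r}\otimes|\psi_r\rangle):\pi\in S_n,\ |\psi_r\rangle\in\mathcal H^{\otimes r}\}$, and define the set of almost power states $|\theta\rangle^{[\otimes,n,r]}=\mathrm{Sym}(\mathcal H^{\otimes n})\cap\mathrm{span}\,\mathcal V(\mathcal H^{\otimes n},|\theta\rangle^{\otimes n-r})$. *)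

theory Defs
  imports "HOL-Analysis.Analysis"
begin

text \<open>
  Model: the finite-dimensional Hilbert space H is the coordinate space with
  orthonormal basis indexed by a finite type 'a, i.e. vectors are functions
  'a \<Rightarrow> complex.  A vector of H^{\<otimes>n} is a function on lists of basis
  labels which vanishes off lists of length n (the basis of H^{\<otimes>n} is the
  set of product basis vectors |x1 ... xn>).  Operators on H^{\<otimes>n} are
  kernels 'a list \<Rightarrow> 'a list \<Rightarrow> complex (matrix entries in the product basis).
\<close>

definition lists_n :: "nat \<Rightarrow> 'a list set" where
  "lists_n n = {xs. length xs = n}"

definition tvec :: "nat \<Rightarrow> ('a list \<Rightarrow> complex) \<Rightarrow> bool" where
  "tvec n \<psi> \<longleftrightarrow> (\<forall>xs. length xs \<noteq> n \<longrightarrow> \<psi> xs = 0)"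

definition tinner :: "nat \<Rightarrow> ('a list \<Rightarrow> complex) \<Rightarrow> ('a list \<Rightarrow> complex) \<Rightarrow> complex" where
  "tinner n \<phi> \<psi> = (\<Sum>xs\<in>lists_n n. cnj (\<phi> xs) * \<psi> xs)"

definition unit_tvec :: "nat \<Rightarrow> ('a list \<Rightarrow> complex) \<Rightarrow> bool" where
  "unit_tvec n \<psi> \<longleftrightarrow> tvec n \<psi> \<and> tinner n \<psi> \<psi> = 1"

definition unit_vec :: "('a::finite \<Rightarrow> complex) \<Rightarrow> bool" where
  "unit_vec \<theta> \<longleftrightarrow> (\<Sum>x\<in>UNIV. cnj (\<theta> x) * \<theta> x) = 1"

definition perm_act :: "nat \<Rightarrow> (nat \<Rightarrow> nat) \<Rightarrow> ('a list \<Rightarrow> complex) \<Rightarrow> ('a list \<Rightarrow> complex)" where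
  "perm_act n \<pi> \<psi> = (\<lambda>xs. if length xs = n then \<psi> (map (\<lambda>i. xs ! \<pi> i) [0..<n]) else 0)"

definition sym_tvec :: "nat \<Rightarrow> ('a list \<Rightarrow> complex) \<Rightarrow> bool" where
  "sym_tvec n \<psi> \<longleftrightarrow> tvec n \<psi> \<and> (\<forall>\<pi>. \<pi> permutes {..<n} \<longrightarrow> perm_act n \<pi> \<psi> = \<psi>)"

definition tpow :: "('a \<Rightarrow> complex) \<Rightarrow> nat \<Rightarrow> ('a list \<Rightarrow> complex)" where
  "tpow \<theta> n = (\<lambda>xs. if length xs = n then prod_list (map \<theta> xs) else 0)"

definition tens :: "nat \<Rightarrow> ('a list \<Rightarrow> complex) \<Rightarrow> ('a list \<Rightarrow> complex) \<Rightarrow> ('a list \<Rightarrow> complex)" where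
  "tens k \<phi> \<psi> = (\<lambda>xs. \<phi> (take k xs) * \<psi> (drop k xs))"

definition lin_span :: "('a list \<Rightarrow> complex) set \<Rightarrow> ('a list \<Rightarrow> complex) set" where
  "lin_span S = {v. \<exists>F c. finite F \<and> F \<subseteq> S \<and> v = (\<lambda>xs. \<Sum>w\<in>F. c w * w xs)}"

definition Vset :: "('a \<Rightarrow> complex) \<Rightarrow> nat \<Rightarrow> nat \<Rightarrow> ('a list \<Rightarrow> complex) set" where
  "Vset \<theta> n r = {perm_act n \<pi> (tens (n - r) (tpow \<theta> (n - r)) \<psi>) | \<pi> \<psi>.
                   \<pi> permutes {..<n} \<and> tvec r \<psi>}"

definition almost_power :: "('a \<Rightarrow> complex) \<Rightarrow> nat \<Rightarrow> nat \<Rightarrow> ('a list \<Rightarrow> complex) set" where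
  "almost_power \<theta> n r = {\<phi>. sym_tvec n \<phi>} \<inter> lin_span (Vset \<theta> n r)"

definition proj :: "('a list \<Rightarrow> complex) \<Rightarrow> ('a list \<Rightarrow> complex) \<Rightarrow> ('a list \<Rightarrow> 'a list \<Rightarrow> complex)" where
  "proj \<phi> \<psi> = (\<lambda>xs ys. \<phi> xs * cnj (\<psi> ys))"

definition ptrace :: "nat \<Rightarrow> ('a list \<Rightarrow> 'a list \<Rightarrow> complex) \<Rightarrow> ('a list \<Rightarrow> 'a list \<Rightarrow> complex)" where
  "ptrace m \<rho> = (\<lambda>ys zs. \<Sum>xs\<in>lists_n m. \<rho> (xs @ ys) (xs @ zs))"

definition op_supp :: "nat \<Rightarrow> ('a list \<Rightarrow> 'a list \<Rightarrow> complex) \<Rightarrow> bool" where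
  "op_supp n A \<longleftrightarrow> (\<forall>xs ys. length xs \<noteq> n \<or> length ys \<noteq> n \<longrightarrow> A xs ys = 0)"

definition qform :: "nat \<Rightarrow> ('a list \<Rightarrow> 'a list \<Rightarrow> complex) \<Rightarrow> ('a list \<Rightarrow> complex) \<Rightarrow> complex" where
  "qform n A v = (\<Sum>xs\<in>lists_n n. \<Sum>ys\<in>lists_n n. cnj (v xs) * A xs ys * v ys)"

definition psd :: "nat \<Rightarrow> ('a list \<Rightarrow> 'a list \<Rightarrow> complex) \<Rightarrow> bool" where
  "psd n A \<longleftrightarrow> (\<forall>v. tvec n v \<longrightarrow> qform n A v \<in> \<real> \<and> 0 \<le> Re (qform n A v))"

definition op_le :: "nat \<Rightarrow> ('a list \<Rightarrow> 'a list \<Rightarrow> complex) \<Rightarrow> ('a list \<Rightarrow> 'a list \<Rightarrow> complex) \<Rightarrow> bool" where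
  "op_le n A B \<longleftrightarrow> psd n (\<lambda>xs ys. B xs ys - A xs ys)"

definition opmul :: "nat \<Rightarrow> ('a list \<Rightarrow> 'a list \<Rightarrow> complex) \<Rightarrow> ('a list \<Rightarrow> 'a list \<Rightarrow> complex) \<Rightarrow> ('a list \<Rightarrow> 'a list \<Rightarrow> complex)" where
  "opmul n A B = (\<lambda>xs zs. \<Sum>ys\<in>lists_n n. A xs ys * B ys zs)"

definition adj :: "('a list \<Rightarrow> 'a list \<Rightarrow> complex) \<Rightarrow> ('a list \<Rightarrow> 'a list \<Rightarrow> complex)" where
  "adj A = (\<lambda>xs ys. cnj (A ys xs))"

definition op_trace :: "nat \<Rightarrow> ('a list \<Rightarrow> 'a list \<Rightarrow> complex) \<Rightarrow> complex" where
  "op_trace n A = (\<Sum>xs\<in>lists_n n. A xs xs)"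

definition trace_norm :: "nat \<Rightarrow> ('a list \<Rightarrow> 'a list \<Rightarrow> complex) \<Rightarrow> real" where
  "trace_norm n X = Re (op_trace n (THE S. op_supp n S \<and> psd n S \<and>
        opmul n S S = opmul n (adj X) X))"

end

theory Submission
  imports Defs
begin

lemma finite_lists_n[simp]: "finite (lists_n n :: 'a::finite list set)"
  unfolding lists_n_def using finite_lists_length_eq[of "UNIV::'a set" n] by simp

lemma lists_n_Suc: "lists_n (Suc n) = (\<lambda>(x,xs). x#xs) ` (UNIV \<times> lists_n n)"
  unfolding lists_n_def by (auto simp: image_def length_Suc_conv)

lemma sum_lists_n_Suc:
  "(\<Sum>zs\<in>lists_n (Suc n). g zs) = (\<Sum>x\<in>(UNIV::'a::finite set). \<Sum>xs\<in>lists_n n. g (x#xs))"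
proof -
  have "inj_on (\<lambda>(x,xs). x#xs) (UNIV \<times> lists_n n)" by (auto simp: inj_on_def)
  then have "(\<Sum>zs\<in>lists_n (Suc n). g zs) = (\<Sum>p\<in>UNIV \<times> lists_n n. g ((\<lambda>(x,xs). x#xs) p))"
    unfolding lists_n_Suc by (rule sum.reindex[unfolded o_def])
  also have "\<dots> = (\<Sum>x\<in>(UNIV::'a set). \<Sum>xs\<in>lists_n n. g (x#xs))"
    by (simp add: sum.cartesian_product split_def)
  finally show ?thesis .
qed

lemma lists_n_0[simp]: "lists_n 0 = {[]}" unfolding lists_n_def by auto

lemma sum_lists_n_append:
  "(\<Sum>zs\<in>lists_n (a+b). g zs) = (\<Sum>xs\<in>lists_n a. \<Sum>ys\<in>lists_n b. g (xs@ys :: 'a::finite list))"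
proof (induction a arbitrary: g)
  case 0 then show ?case by simp
next
  case (Suc a)
  have "(\<Sum>zs\<in>lists_n (Suc a + b). g zs) = (\<Sum>x\<in>(UNIV::'a set). \<Sum>xs\<in>lists_n (a+b). g (x#xs))"
    by (simp add: sum_lists_n_Suc)
  also have "\<dots> = (\<Sum>x\<in>(UNIV::'a set). \<Sum>xs\<in>lists_n a. \<Sum>ys\<in>lists_n b. g (x#xs@ys))"
    using Suc.IH[of "\<lambda>zs. g (_ # zs)"] by simp
  also have "\<dots> = (\<Sum>xs\<in>lists_n (Suc a). \<Sum>ys\<in>lists_n b. g (xs@ys))"
    by (simp add: sum_lists_n_Suc)
  finally show ?case .
qed

lemma sum_prod_lists:
  "(\<Sum>ys\<in>lists_n k. \<Prod>i<k. F i (ys!i)) = (\<Prod>i<k. \<Sum>y\<in>(UNIV::'a::finite set). (F i y :: complex))"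
proof (induction k arbitrary: F)
  case 0 then show ?case by simp
next
  case (Suc k)
  have "(\<Sum>ys\<in>lists_n (Suc k). \<Prod>i<Suc k. F i (ys!i))
      = (\<Sum>y\<in>(UNIV::'a set). \<Sum>ys\<in>lists_n k. F 0 y * (\<Prod>i<k. F (Suc i) (ys!i)))"
    by (simp del: prod.lessThan_Suc add: sum_lists_n_Suc prod.lessThan_Suc_shift)
  also have "\<dots> = (\<Sum>y\<in>(UNIV::'a set). F 0 y) * (\<Sum>ys\<in>lists_n k. (\<Prod>i<k. F (Suc i) (ys!i)))"
    by (simp add: sum_product)
  also have "\<dots> = (\<Prod>i<Suc k. \<Sum>y\<in>(UNIV::'a set). F i y)"
    using Suc.IH[of "\<lambda>i. F (Suc i)"] by (simp del: prod.lessThan_Suc add: prod.lessThan_Suc_shift)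
  finally show ?case .
qed

lemma cnj_mult_self: "cnj z * z = complex_of_real ((cmod z)^2)"
  by (subst complex_norm_square) (simp add: mult.commute)

lemma tinner_self: "tinner k f f = complex_of_real (\<Sum>xs\<in>lists_n k. (cmod (f xs))^2)"
  unfolding tinner_def by (simp add: cnj_mult_self)

lemma tinner_self_Re: "Re (tinner k f f) = (\<Sum>xs\<in>lists_n k. (cmod (f xs))^2)"
  by (simp add: tinner_self)

lemma tinner_self_ge0: "0 \<le> Re (tinner k f f)"
  by (simp add: tinner_self_Re sum_nonneg)

lemma tinner_cnj: "tinner k g f = cnj (tinner k f g)"
  unfolding tinner_def by (simp add: mult.commute)

lemma tinner_CS:
  fixes f g :: "'a::finite list \<Rightarrow> complex"
  shows "(cmod (tinner k f g))^2 \<le> Re (tinner k f f) * Re (tinner k g g)"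
proof -
  have "cmod (tinner k f g) \<le> (\<Sum>xs\<in>lists_n k. cmod (f xs) * cmod (g xs))"
    unfolding tinner_def by (rule order_trans[OF norm_sum]) (simp add: norm_mult)
  then have "(cmod (tinner k f g))^2 \<le> (\<Sum>xs\<in>lists_n k. cmod (f xs) * cmod (g xs))^2"
    by (simp add: power_mono)
  also have "\<dots> \<le> (\<Sum>xs\<in>lists_n k. (cmod (f xs))^2) * (\<Sum>xs\<in>lists_n k. (cmod (g xs))^2)"
    by (rule Cauchy_Schwarz_ineq_sum)
  finally show ?thesis by (simp add: tinner_self_Re)
qed

lemma tinner_zero_imp:
  fixes z :: "'a::finite list \<Rightarrow> complex"
  assumes "tvec k z" "tinner k z z = 0"
  shows "z = (\<lambda>_. 0)"
proof
  fix xs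
  show "z xs = 0"
  proof (cases "xs \<in> lists_n k")
    case True
    have "(\<Sum>xs\<in>lists_n k. (cmod (z xs))^2) = 0"
      using assms(2) unfolding tinner_self by (simp only: of_real_eq_0_iff)
    then have "(cmod (z xs))^2 = 0"
      using True by (subst (asm) sum_nonneg_eq_0_iff) auto
    then show ?thesis by simp
  next
    case False then show ?thesis using assms(1) by (simp add: tvec_def lists_n_def)
  qed
qed

definition app :: "nat \<Rightarrow> ('a list \<Rightarrow> 'a list \<Rightarrow> complex) \<Rightarrow> ('a list \<Rightarrow> complex) \<Rightarrow> ('a list \<Rightarrow> complex)" where
  "app k A f = (\<lambda>xs. \<Sum>ys\<in>lists_n k. A xs ys * f ys)"

lemma app_app: "app k A (app k B f) = app k (opmul k A B) (f :: 'a::finite list \<Rightarrow> complex)"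
  unfolding app_def opmul_def
proof (rule ext)
  fix xs
  have "(\<Sum>ys\<in>lists_n k. A xs ys * (\<Sum>zs\<in>lists_n k. B ys zs * f zs))
      = (\<Sum>ys\<in>lists_n k. \<Sum>zs\<in>lists_n k. A xs ys * B ys zs * f zs)"
    by (simp add: sum_distrib_left mult.assoc)
  also have "\<dots> = (\<Sum>zs\<in>lists_n k. \<Sum>ys\<in>lists_n k. A xs ys * B ys zs * f zs)"
    by (rule sum.swap)
  also have "\<dots> = (\<Sum>zs\<in>lists_n k. (\<Sum>ys\<in>lists_n k. A xs ys * B ys zs) * f zs)"
    by (simp add: sum_distrib_right)
  finally show "(\<Sum>ys\<in>lists_n k. A xs ys * (\<Sum>zs\<in>lists_n k. B ys zs * f zs))
      = (\<Sum>zs\<in>lists_n k. (\<Sum>ys\<in>lists_n k. A xs ys * B ys zs) * f zs)" .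
qed

lemma app_tvec: "op_supp k S \<Longrightarrow> tvec k (app k S f)"
  unfolding op_supp_def tvec_def app_def by auto

lemma qform_app: "qform k S z = tinner k z (app k S z)"
  unfolding qform_def tinner_def app_def by (simp add: sum_distrib_left mult.assoc)

lemma app_lin: "app k S (\<lambda>xs. f xs + c * g xs) = (\<lambda>xs. app k S f xs + c * app k S g xs)"
  unfolding app_def by (rule ext) (simp add: algebra_simps sum.distrib sum_distrib_left)

lemma app_diff: "app k S (\<lambda>xs. f xs - g xs) = (\<lambda>xs. app k S f xs - app k S g xs)"
  unfolding app_def by (rule ext) (simp add: algebra_simps sum_subtractf)

lemma app_scale: "app k S (\<lambda>xs. c * f xs) = (\<lambda>xs. c * app k S f xs)"
  unfolding app_def by (rule ext) (simp add: algebra_simps sum_distrib_left)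

lemma psd_eig_pos:
  fixes S :: "'a::finite list \<Rightarrow> 'a list \<Rightarrow> complex"
  assumes psd: "psd k S" and supp: "op_supp k S" and sq: "opmul k S S = A"
    and eig: "app k A z = (\<lambda>xs. complex_of_real d * z xs)" and d: "d > 0" and tz: "tvec k z"
  shows "app k S z = (\<lambda>xs. complex_of_real (sqrt d) * z xs)"
proof -
  define s where "s = sqrt d"
  have s: "s > 0" "s * s = d" using d by (auto simp: s_def)
  define q where "q = (\<lambda>xs. app k S z xs - complex_of_real s * z xs)"
  have tq: "tvec k q" using app_tvec[OF supp, of z] tz by (simp add: q_def tvec_def)
  have "app k S q = (\<lambda>xs. app k S (app k S z) xs - complex_of_real s * app k S z xs)"
    unfolding q_def app_diff app_scale by simp
  also have "\<dots> = (\<lambda>xs. complex_of_real d * z xs - complex_of_real s * app k S z xs)"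
    by (simp add: app_app sq eig)
  also have "\<dots> = (\<lambda>xs. - complex_of_real s * q xs)"
  proof (rule ext)
    fix xs
    have dd: "complex_of_real d = complex_of_real s * complex_of_real s" using s(2) by (metis of_real_mult)
    show "complex_of_real d * z xs - complex_of_real s * app k S z xs = - complex_of_real s * q xs"
      unfolding q_def dd by (simp add: algebra_simps)
  qed
  finally have Sq: "app k S q = (\<lambda>xs. - complex_of_real s * q xs)" .
  have "qform k S q = - complex_of_real s * tinner k q q"
    unfolding qform_app Sq tinner_def by (simp add: sum_distrib_left algebra_simps)
  then have "0 \<le> - s * Re (tinner k q q)"
  proof -
    have "0 \<le> Re (qform k S q)" using psd tq unfolding psd_def by blast
    also have "Re (qform k S q) = - s * Re (tinner k q q)"
      unfolding \<open>qform k S q = _\<close> by simp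
    finally show ?thesis .
  qed
  then have "Re (tinner k q q) \<le> 0" using s(1) by (simp add: mult_le_0_iff)
  then have "tinner k q q = 0" using tinner_self_ge0[of k q] by (simp add: tinner_self)
  then have "q = (\<lambda>_. 0)" using tinner_zero_imp tq by blast
  then have "\<And>xs. q xs = 0" by simp
  then have "\<And>xs. app k S z xs = complex_of_real s * z xs" unfolding q_def by (simp add: right_minus_eq)
  then show ?thesis unfolding s_def by (intro ext) blast
qed

lemma psd_ker:
  fixes S :: "'a::finite list \<Rightarrow> 'a list \<Rightarrow> complex"
  assumes psd: "psd k S" and supp: "op_supp k S" and sq: "opmul k S S = A"
    and ker: "app k A z = (\<lambda>_. 0)" and tz: "tvec k z"
  shows "app k S z = (\<lambda>_. 0)"
proof -
  define p where "p = app k S z"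
  have tp: "tvec k p" using app_tvec[OF supp] by (simp add: p_def)
  have Sp: "app k S p = (\<lambda>_. 0)" unfolding p_def app_app sq ker ..
  define P where "P = Re (tinner k p p)"
  define \<alpha> where "\<alpha> = Re (tinner k z p)"
  have key: "0 \<le> \<alpha> + t * P" for t :: real
  proof -
    define y where "y = (\<lambda>xs. z xs + complex_of_real t * p xs)"
    have ty: "tvec k y" using tz tp by (simp add: y_def tvec_def)
    have zp: "app k S z = p" by (simp add: p_def)
    have Sy: "app k S y = p" unfolding y_def app_lin Sp zp by simp
    have "qform k S y = tinner k z p + complex_of_real t * tinner k p p"
      unfolding qform_app Sy unfolding y_def tinner_def by (simp add: algebra_simps sum.distrib sum_distrib_left)
    then have "Re (qform k S y) = \<alpha> + t * P" by (simp add: \<alpha>_def P_def)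
    moreover have "0 \<le> Re (qform k S y)" using psd ty unfolding psd_def by blast
    ultimately show ?thesis by simp
  qed
  have "P = 0"
  proof (rule ccontr)
    assume "P \<noteq> 0"
    then have "P > 0" using tinner_self_ge0[of k p] by (simp add: P_def)
    have "0 \<le> \<alpha> + (-(\<alpha>+1)/P) * P" by (rule key)
    then show False using \<open>P>0\<close> by simp
  qed
  then have "(\<Sum>xs\<in>lists_n k. (cmod (p xs))^2) = 0" by (simp add: P_def tinner_self_Re)
  then have "tinner k p p = 0" by (simp add: tinner_self)
  then show ?thesis using tinner_zero_imp tp p_def by blast
qed

lemma app_adj: "tinner k y (app k (adj X) g) = tinner k (app k X y) (g :: 'a::finite list \<Rightarrow> complex)"
proof -
  have "tinner k y (app k (adj X) g) = (\<Sum>xs\<in>lists_n k. \<Sum>ys\<in>lists_n k. cnj (y xs) * cnj (X ys xs) * g ys)"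
    unfolding tinner_def app_def adj_def by (simp add: sum_distrib_left mult.assoc)
  also have "\<dots> = (\<Sum>ys\<in>lists_n k. \<Sum>xs\<in>lists_n k. cnj (y xs) * cnj (X ys xs) * g ys)"
    by (rule sum.swap)
  also have "\<dots> = (\<Sum>ys\<in>lists_n k. (\<Sum>xs\<in>lists_n k. cnj (y xs) * cnj (X ys xs)) * g ys)"
    by (simp add: sum_distrib_right)
  also have "\<dots> = tinner k (app k X y) g"
    unfolding tinner_def app_def by (simp add: mult.commute)
  finally show ?thesis .
qed

lemma qform_adj_mult:
  fixes X :: "'a::finite list \<Rightarrow> 'a list \<Rightarrow> complex"
  shows "qform k (opmul k (adj X) X) y = tinner k (app k X y) (app k X y)"
  unfolding qform_app app_app[symmetric] app_adj ..

lemma psd_adj_mult: "psd k (opmul k (adj X) (X :: 'a::finite list \<Rightarrow> 'a list \<Rightarrow> complex))"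
  unfolding psd_def qform_adj_mult by (simp add: tinner_self sum_nonneg)

lemma qform_scale: "qform k (\<lambda>xs ys. A xs ys / c) y = qform k A y / c"
  unfolding qform_def by (simp add: sum_divide_distrib)

lemma app_kscale: "app k (\<lambda>xs ys. c * B xs ys) f = (\<lambda>xs. c * app k B f xs)"
  unfolding app_def by (simp add: sum_distrib_left mult.assoc)

lemma app_delta:
  fixes S :: "'a::finite list \<Rightarrow> 'a list \<Rightarrow> complex"
  assumes "ys0 \<in> lists_n k"
  shows "app k S (\<lambda>ys. if ys = ys0 then 1 else 0) xs = S xs ys0"
proof -
  have "(\<Sum>ys\<in>lists_n k. S xs ys * (if ys = ys0 then 1 else 0)) = (\<Sum>ys\<in>lists_n k. if ys = ys0 then S xs ys0 else 0)"
    by (rule sum.cong) auto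
  then show ?thesis unfolding app_def using assms by simp
qed

lemma rank2_sum:
  "(\<Sum>ys\<in>L. B ys * (u ys * cu - a * (u ys * cw) - ca * (w ys * cu) + w ys * cw))
   = (\<Sum>ys\<in>L. B ys * u ys) * cu - a * ((\<Sum>ys\<in>L. B ys * u ys) * cw)
     - ca * ((\<Sum>ys\<in>L. B ys * w ys) * cu) + (\<Sum>ys\<in>L. B ys * w ys) * (cw::complex)"
  by (simp add: algebra_simps sum.distrib sum_subtractf sum_distrib_left sum_distrib_right)

lemma trace_norm_pure:
  fixes u w :: "'a::finite list \<Rightarrow> complex"
  assumes u: "unit_tvec k u" and w: "unit_tvec k w"
  shows "trace_norm k (\<lambda>xs ys. proj u u xs ys - proj w w xs ys) = 2 * sqrt (1 - (cmod (tinner k u w))^2)"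
proof -
  define a where "a = tinner k u w"
  define d where "d = 1 - (cmod a)^2"
  define X where "X = (\<lambda>xs ys. proj u u xs ys - proj w w xs ys)"
  define A where "A = opmul k (adj X) X"
  have tu: "tvec k u" and uu: "tinner k u u = 1" using u by (auto simp: unit_tvec_def)
  have tw: "tvec k w" and ww: "tinner k w w = 1" using w by (auto simp: unit_tvec_def)
  have wu: "tinner k w u = cnj a" using tinner_cnj a_def by metis
  have "(cmod a)^2 \<le> Re (tinner k u u) * Re (tinner k w w)" unfolding a_def by (rule tinner_CS)
  then have d0: "0 \<le> d" using uu ww by (simp add: d_def)
  have dd: "complex_of_real d = 1 - a * cnj a"
    by (simp only: d_def of_real_diff of_real_1 complex_norm_square)
  have Aform: "A xs zs = u xs * cnj (u zs) - a * (u xs * cnj (w zs)) - cnj a * (w xs * cnj (u zs)) + w xs * cnj (w zs)" for xs zs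
  proof -
    have "A xs zs = (\<Sum>ys\<in>lists_n k. u xs * cnj (u zs) * (cnj (u ys) * u ys) - u xs * cnj (w zs) * (cnj (u ys) * w ys)
          - w xs * cnj (u zs) * (cnj (w ys) * u ys) + w xs * cnj (w zs) * (cnj (w ys) * w ys))"
      unfolding A_def opmul_def adj_def X_def proj_def by (intro sum.cong refl) (simp add: algebra_simps)
    also have "\<dots> = u xs * cnj (u zs) * tinner k u u - u xs * cnj (w zs) * tinner k u w
          - w xs * cnj (u zs) * tinner k w u + w xs * cnj (w zs) * tinner k w w"
      unfolding tinner_def by (simp add: sum.distrib sum_subtractf sum_distrib_left)
    finally show ?thesis using uu ww wu by (simp add: a_def algebra_simps)
  qed
  have Au: "app k A u = (\<lambda>xs. complex_of_real d * u xs)"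
  proof (rule ext)
    fix xs
    have "app k A u xs = u xs * tinner k u u - a * (u xs * tinner k w u) - cnj a * (w xs * tinner k u u) + w xs * tinner k w u"
      unfolding app_def Aform tinner_def
      by (simp add: algebra_simps sum.distrib sum_subtractf sum_distrib_left)
    then show "app k A u xs = complex_of_real d * u xs" using uu wu by (simp add: dd algebra_simps)
  qed
  have Aw: "app k A w = (\<lambda>xs. complex_of_real d * w xs)"
  proof (rule ext)
    fix xs
    have "app k A w xs = u xs * tinner k u w - a * (u xs * tinner k w w) - cnj a * (w xs * tinner k u w) + w xs * tinner k w w"
      unfolding app_def Aform tinner_def
      by (simp add: algebra_simps sum.distrib sum_subtractf sum_distrib_left)
    then show "app k A w xs = complex_of_real d * w xs" using ww by (simp add: dd a_def algebra_simps)
  qed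
  have AA: "opmul k A A = (\<lambda>xs zs. complex_of_real d * A xs zs)"
  proof (intro ext)
    fix xs zs
    have "opmul k A A xs zs = (\<Sum>ys\<in>lists_n k. A xs ys * (u ys * cnj (u zs) - a * (u ys * cnj (w zs)) - cnj a * (w ys * cnj (u zs)) + w ys * cnj (w zs)))"
      unfolding opmul_def by (intro sum.cong refl) (simp only: Aform[of _ zs])
    also have "\<dots> = app k A u xs * cnj (u zs) - a * (app k A u xs * cnj (w zs)) - cnj a * (app k A w xs * cnj (u zs)) + app k A w xs * cnj (w zs)"
      unfolding rank2_sum app_def ..
    also have "\<dots> = complex_of_real d * A xs zs"
      unfolding Au Aw Aform by (simp add: algebra_simps)
    finally show "opmul k A A xs zs = complex_of_real d * A xs zs" .
  qed
  have trA: "op_trace k A = complex_of_real (2 * d)"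
  proof -
    have "op_trace k A = tinner k u u - a * tinner k w u - cnj a * tinner k u w + tinner k w w"
      unfolding op_trace_def Aform tinner_def
      by (simp add: algebra_simps sum.distrib sum_subtractf sum_distrib_left)
    then show ?thesis using uu ww wu by (simp add: dd a_def algebra_simps)
  qed
  have trX: "op_trace k A = complex_of_real (\<Sum>xs\<in>lists_n k. \<Sum>ys\<in>lists_n k. (cmod (X ys xs))^2)"
    unfolding op_trace_def A_def opmul_def adj_def by (simp add: cnj_mult_self)
  have Asupp: "op_supp k A" unfolding op_supp_def Aform using tu tw by (auto simp: tvec_def)
  have A0: "A = (\<lambda>_ _. 0)" if "d = 0"
  proof -
    have "(\<Sum>xs\<in>lists_n k. \<Sum>ys\<in>lists_n k. (cmod (X ys xs))^2) = 0"
      using trA trX that by (metis of_real_eq_iff mult_zero_right)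
    then have "(\<Sum>ys\<in>lists_n k. (cmod (X ys xs))^2) = 0" if "xs \<in> lists_n k" for xs
      using that by (subst (asm) sum_nonneg_eq_0_iff) (auto intro: sum_nonneg)
    then have X0: "X ys xs = 0" if "xs \<in> lists_n k" "ys \<in> lists_n k" for xs ys
      using that by (subst (asm) sum_nonneg_eq_0_iff) auto
    have X0': "X ys xs = 0" if "ys \<in> lists_n k" for xs ys
    proof (cases "xs \<in> lists_n k")
      case True then show ?thesis using X0 that by blast
    next
      case False then show ?thesis using tu tw by (simp add: X_def proj_def tvec_def lists_n_def)
    qed
    show ?thesis unfolding A_def opmul_def adj_def by (intro ext) (simp add: X0')
  qed
  define s where "s = sqrt d"
  have s2: "d = s * s" using d0 by (simp add: s_def)
  define S0 where "S0 = (\<lambda>xs ys. A xs ys / complex_of_real s)"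
  have S0supp: "op_supp k S0" using Asupp by (simp add: op_supp_def S0_def)
  have S0psd: "psd k S0"
    using psd_adj_mult[of k X] unfolding S0_def psd_def qform_scale A_def[symmetric]
    by (auto simp: s_def Re_divide_of_real d0 intro!: divide_nonneg_nonneg)
  have S0sq: "opmul k S0 S0 = A"
  proof (cases "d = 0")
    case True then show ?thesis using A0 by (simp add: S0_def opmul_def)
  next
    case False
    have "opmul k S0 S0 = (\<lambda>xs zs. opmul k A A xs zs / (complex_of_real s * complex_of_real s))"
      unfolding S0_def opmul_def by (intro ext) (simp add: sum_divide_distrib)
    also have "\<dots> = A" unfolding AA using False s2 by (intro ext) (simp flip: of_real_mult)
    finally show ?thesis .
  qed
  have uniq: "S = S0" if "op_supp k S \<and> psd k S \<and> opmul k S S = A" for S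
  proof (intro ext)
    fix xs ys0
    have Ssupp: "op_supp k S" and Spsd: "psd k S" and Ssq: "opmul k S S = A" using that by auto
    show "S xs ys0 = S0 xs ys0"
    proof (cases "xs \<in> lists_n k \<and> ys0 \<in> lists_n k")
      case False
      then show ?thesis using Ssupp S0supp unfolding op_supp_def lists_n_def by auto
    next
      case True
      define e where "e = (\<lambda>ys. if ys = ys0 then (1::complex) else 0)"
      have te: "tvec k e" using True by (auto simp: e_def tvec_def lists_n_def)
      have Se: "app k S e xs = S xs ys0" unfolding e_def using True by (simp add: app_delta)
      have Ae: "app k A e xs' = A xs' ys0" for xs' unfolding e_def using True by (simp add: app_delta)
      show ?thesis
      proof (cases "d = 0")
        case True
        have "app k A e = (\<lambda>_. 0)" using A0[OF True] by (simp add: app_def)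
        then have "app k S e = (\<lambda>_. 0)" by (rule psd_ker[OF Spsd Ssupp Ssq _ te])
        then show ?thesis using Se A0[OF True] by (simp add: S0_def)
      next
        case False
        then have dpos: "d > 0" using d0 by simp
        define c where "c = inverse (complex_of_real d)"
        define z1 where "z1 = (\<lambda>xs. c * app k A e xs)"
        define z2 where "z2 = (\<lambda>xs. e xs - z1 xs)"
        have tz1: "tvec k z1" using app_tvec[OF Asupp] by (simp add: z1_def tvec_def)
        have tz2: "tvec k z2" using tz1 te by (simp add: z2_def tvec_def)
        have cd: "c * complex_of_real d = 1" using False by (simp add: c_def)
        have Az1: "app k A z1 = (\<lambda>xs. complex_of_real d * z1 xs)"
          unfolding z1_def app_scale app_app AA app_kscale by (intro ext) (simp add: algebra_simps)
        have Az2: "app k A z2 = (\<lambda>_. 0)"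
          unfolding z2_def app_diff Az1 unfolding z1_def using cd by (intro ext) (simp add: algebra_simps)
        have Sz1: "app k S z1 = (\<lambda>xs. complex_of_real (sqrt d) * z1 xs)"
          by (rule psd_eig_pos[OF Spsd Ssupp Ssq Az1 dpos tz1])
        have Sz2: "app k S z2 = (\<lambda>_. 0)" by (rule psd_ker[OF Spsd Ssupp Ssq Az2 tz2])
        have "e = (\<lambda>xs. z1 xs + 1 * z2 xs)" by (simp add: z2_def)
        then have "app k S e = (\<lambda>xs. app k S z1 xs + 1 * app k S z2 xs)" by (simp only: app_lin)
        then have "S xs ys0 = complex_of_real s * (c * A xs ys0)"
          using Se Sz1 Sz2 by (simp add: z1_def Ae s_def)
        also have "\<dots> = S0 xs ys0"
          using False s2 by (simp add: S0_def c_def field_simps flip: of_real_mult)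
        finally show ?thesis .
      qed
    qed
  qed
  have "(THE S. op_supp k S \<and> psd k S \<and> opmul k S S = opmul k (adj X) X) = S0"
    unfolding A_def[symmetric]
  proof (rule the_equality)
    show "op_supp k S0 \<and> psd k S0 \<and> opmul k S0 S0 = A" using S0supp S0psd S0sq by blast
  next
    fix S assume "op_supp k S \<and> psd k S \<and> opmul k S S = A"
    then show "S = S0" by (rule uniq)
  qed
  then have "trace_norm k X = Re (op_trace k S0)" by (simp add: trace_norm_def)
  also have "op_trace k S0 = op_trace k A / complex_of_real s"
    unfolding op_trace_def S0_def by (simp add: sum_divide_distrib)
  also have "Re (op_trace k A / complex_of_real s) = 2 * s"
    using trA s2 by (cases "s = 0") (auto simp: Re_divide_of_real)
  finally show ?thesis by (simp add: X_def s_def d_def a_def)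
qed

section \<open>Tensor powers of single-site operators\<close>

definition kp :: "('a \<Rightarrow> 'a \<Rightarrow> complex) \<Rightarrow> 'a list \<Rightarrow> 'a list \<Rightarrow> complex" where
  "kp U xs ys = (\<Prod>i<length xs. U (xs!i) (ys!i))"

definition tpw :: "('a \<Rightarrow> 'a \<Rightarrow> complex) \<Rightarrow> nat \<Rightarrow> ('a list \<Rightarrow> complex) \<Rightarrow> ('a list \<Rightarrow> complex)" where
  "tpw U k f = (\<lambda>xs. if length xs = k then \<Sum>ys\<in>lists_n k. kp U xs ys * f ys else 0)"

definition mm :: "('a::finite \<Rightarrow> 'a \<Rightarrow> complex) \<Rightarrow> ('a \<Rightarrow> 'a \<Rightarrow> complex) \<Rightarrow> ('a \<Rightarrow> 'a \<Rightarrow> complex)" where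
  "mm V U = (\<lambda>x z. \<Sum>y\<in>UNIV. V x y * U y z)"

definition ust :: "('a \<Rightarrow> 'a \<Rightarrow> complex) \<Rightarrow> ('a \<Rightarrow> 'a \<Rightarrow> complex)" where
  "ust U = (\<lambda>x y. cnj (U y x))"

definition unitary :: "('a::finite \<Rightarrow> 'a \<Rightarrow> complex) \<Rightarrow> bool" where
  "unitary U \<longleftrightarrow> mm (ust U) U = (\<lambda>x z. if x = z then 1 else 0) \<and> mm U (ust U) = (\<lambda>x z. if x = z then 1 else 0)"

lemma ust_ust[simp]: "ust (ust U) = U" by (simp add: ust_def)

lemma unitary_ust: "unitary U \<Longrightarrow> unitary (ust U)"
  unfolding unitary_def by simp

lemma kp_Nil[simp]: "kp U [] ys = 1" by (simp add: kp_def)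

lemma kp_Cons[simp]: "kp U (x#xs) (y#ys) = U x y * kp U xs ys"
  unfolding kp_def by (simp del: prod.lessThan_Suc add: prod.lessThan_Suc_shift)

lemma kp_append:
  "length ps = length xs1 \<Longrightarrow> kp U (xs1@xs2) (ps@qs) = kp U xs1 ps * kp U xs2 qs"
proof (induction xs1 arbitrary: ps)
  case Nil then show ?case by simp
next
  case (Cons x xs1)
  then obtain p ps' where "ps = p # ps'" by (cases ps) auto
  with Cons show ?case by simp
qed

lemma prod_list_map_nth: "prod_list (map h xs) = (\<Prod>i<length xs. h (xs!i))"
proof (induction xs)
  case Nil then show ?case by simp
next
  case (Cons x xs) then show ?case by (simp del: prod.lessThan_Suc add: prod.lessThan_Suc_shift)
qed

lemma tpw_tvec: "tvec k (tpw U k f)"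
  by (simp add: tvec_def tpw_def)

lemma kp_mm:
  fixes U V :: "'a::finite \<Rightarrow> 'a \<Rightarrow> complex"
  assumes "length xs = k" "length zs = k"
  shows "(\<Sum>ys\<in>lists_n k. kp V xs ys * kp U ys zs) = kp (mm V U) xs zs"
proof -
  have "(\<Sum>ys\<in>lists_n k. kp V xs ys * kp U ys zs) = (\<Sum>ys\<in>lists_n k. \<Prod>i<k. V (xs!i) (ys!i) * U (ys!i) (zs!i))"
    using assms by (intro sum.cong refl) (simp add: kp_def prod.distrib lists_n_def)
  also have "\<dots> = (\<Prod>i<k. \<Sum>y\<in>UNIV. V (xs!i) y * U y (zs!i))" by (rule sum_prod_lists)
  also have "\<dots> = kp (mm V U) xs zs" using assms by (simp add: kp_def mm_def)
  finally show ?thesis .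
qed

lemma tpw_tpw:
  fixes U V :: "'a::finite \<Rightarrow> 'a \<Rightarrow> complex"
  shows "tpw V k (tpw U k f) = tpw (mm V U) k f"
proof (rule ext)
  fix xs
  show "tpw V k (tpw U k f) xs = tpw (mm V U) k f xs"
  proof (cases "length xs = k")
    case True
    have "tpw V k (tpw U k f) xs = (\<Sum>ys\<in>lists_n k. \<Sum>zs\<in>lists_n k. kp V xs ys * kp U ys zs * f zs)"
      using True by (auto simp: tpw_def lists_n_def sum_distrib_left mult.assoc intro!: sum.cong)
    also have "\<dots> = (\<Sum>zs\<in>lists_n k. \<Sum>ys\<in>lists_n k. kp V xs ys * kp U ys zs * f zs)"
      by (rule sum.swap)
    also have "\<dots> = (\<Sum>zs\<in>lists_n k. kp (mm V U) xs zs * f zs)"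
    proof (intro sum.cong refl)
      fix zs :: "'a list" assume "zs \<in> lists_n k"
      then have "length zs = k" by (simp add: lists_n_def)
      then show "(\<Sum>ys\<in>lists_n k. kp V xs ys * kp U ys zs * f zs) = kp (mm V U) xs zs * f zs"
        using kp_mm[OF True] by (simp add: sum_distrib_right[symmetric])
    qed
    finally show ?thesis using True by (simp add: tpw_def)
  qed (simp add: tpw_def)
qed

lemma kp_delta:
  assumes "length ys = length xs"
  shows "kp (\<lambda>x z. if x = z then 1 else 0) xs ys = (if xs = ys then 1 else 0)"
proof (cases "xs = ys")
  case True then show ?thesis by (simp add: kp_def)
next
  case False
  then obtain i where i: "i < length xs" "xs!i \<noteq> ys!i" using assms by (metis nth_equalityI)
  have "(\<Prod>i<length xs. (\<lambda>x z. if x = z then (1::complex) else 0) (xs!i) (ys!i)) = 0"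
    by (rule prod_zero) (use i in auto)
  then show ?thesis using False by (simp add: kp_def)
qed

lemma tpw_id:
  assumes "tvec k f"
  shows "tpw (\<lambda>x z. if x = z then 1 else 0) k f = (f :: 'a::finite list \<Rightarrow> complex)"
proof (rule ext)
  fix xs
  show "tpw (\<lambda>x z. if x = z then 1 else 0) k f xs = f xs"
  proof (cases "length xs = k")
    case True
    have "(\<Sum>ys\<in>lists_n k. kp (\<lambda>x z. if x = z then 1 else 0) xs ys * f ys) = (\<Sum>ys\<in>lists_n k. if ys = xs then f xs else 0)"
      using True by (intro sum.cong refl) (auto simp: kp_delta lists_n_def)
    also have "\<dots> = f xs" using True by (simp add: lists_n_def[symmetric] lists_n_def[of k, symmetric] ) (simp add: lists_n_def)
    finally show ?thesis using True by (simp add: tpw_def)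
  qed (use assms in \<open>simp add: tpw_def tvec_def\<close>)
qed

lemma tpw_inv:
  fixes U :: "'a::finite \<Rightarrow> 'a \<Rightarrow> complex"
  assumes "unitary U" "tvec k f"
  shows "tpw (ust U) k (tpw U k f) = f" "tpw U k (tpw (ust U) k f) = f"
  using assms by (simp_all add: tpw_tpw unitary_def tpw_id)

lemma cnj_kp: "length ys = length xs \<Longrightarrow> cnj (kp U xs ys) = kp (ust U) ys xs"
  by (simp add: kp_def ust_def)

lemma tpw_adj:
  fixes U :: "'a::finite \<Rightarrow> 'a \<Rightarrow> complex"
  shows "tinner k (tpw U k f) g = tinner k f (tpw (ust U) k g)"
proof -
  have "tinner k (tpw U k f) g = (\<Sum>xs\<in>lists_n k. \<Sum>ys\<in>lists_n k. cnj (f ys) * (kp (ust U) ys xs * g xs))"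
    unfolding tinner_def tpw_def
    by (intro sum.cong refl) (auto simp: lists_n_def sum_distrib_right cnj_kp intro!: sum.cong)
  also have "\<dots> = (\<Sum>ys\<in>lists_n k. \<Sum>xs\<in>lists_n k. cnj (f ys) * (kp (ust U) ys xs * g xs))"
    by (rule sum.swap)
  also have "\<dots> = tinner k f (tpw (ust U) k g)"
    unfolding tinner_def tpw_def by (intro sum.cong refl) (auto simp: lists_n_def sum_distrib_left)
  finally show ?thesis .
qed

lemma tpw_inner:
  fixes U :: "'a::finite \<Rightarrow> 'a \<Rightarrow> complex"
  assumes "unitary U" "tvec k g"
  shows "tinner k (tpw U k f) (tpw U k g) = tinner k f g"
  using assms by (simp add: tpw_adj tpw_inv)

lemma tpw_lin:
  fixes U :: "'a::finite \<Rightarrow> 'a \<Rightarrow> complex"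
  assumes "finite J"
  shows "tpw U k (\<lambda>xs. \<Sum>j\<in>J. c j * F j xs) = (\<lambda>xs. \<Sum>j\<in>J. c j * tpw U k (F j) xs)"
proof (rule ext)
  fix xs
  show "tpw U k (\<lambda>xs. \<Sum>j\<in>J. c j * F j xs) xs = (\<Sum>j\<in>J. c j * tpw U k (F j) xs)"
  proof (cases "length xs = k")
    case True
    have "(\<Sum>ys\<in>lists_n k. kp U xs ys * (\<Sum>j\<in>J. c j * F j ys)) = (\<Sum>j\<in>J. \<Sum>ys\<in>lists_n k. c j * (kp U xs ys * F j ys))"
      by (simp add: sum_distrib_left sum.swap[of _ J] algebra_simps)
    then show ?thesis using True by (simp add: tpw_def sum_distrib_left)
  qed (simp add: tpw_def)
qed

lemma tpw_scale: "tpw U k (\<lambda>xs. c * f xs) = (\<lambda>xs. c * tpw U k f xs)"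
  unfolding tpw_def by (intro ext) (simp add: sum_distrib_left algebra_simps)

lemma tpw_tpow:
  fixes U :: "'a::finite \<Rightarrow> 'a \<Rightarrow> complex"
  shows "tpw U k (tpow \<theta> k) = tpow (\<lambda>x. \<Sum>y\<in>UNIV. U x y * \<theta> y) k"
proof (rule ext)
  fix xs
  show "tpw U k (tpow \<theta> k) xs = tpow (\<lambda>x. \<Sum>y\<in>UNIV. U x y * \<theta> y) k xs"
  proof (cases "length xs = k")
    case True
    have "(\<Sum>ys\<in>lists_n k. kp U xs ys * tpow \<theta> k ys) = (\<Sum>ys\<in>lists_n k. \<Prod>i<k. U (xs!i) (ys!i) * \<theta> (ys!i))"
      using True by (intro sum.cong refl) (simp add: kp_def tpow_def lists_n_def prod_list_map_nth prod.distrib)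
    also have "\<dots> = (\<Prod>i<k. \<Sum>y\<in>UNIV. U (xs!i) y * \<theta> y)" by (rule sum_prod_lists)
    finally show ?thesis using True by (simp add: tpw_def tpow_def prod_list_map_nth)
  qed (simp add: tpw_def tpow_def)
qed

lemma perm_act_alt: "perm_act n \<pi> f = (\<lambda>xs. if length xs = n then f (permute_list \<pi> xs) else 0)"
  unfolding perm_act_def permute_list_def by (intro ext) auto

lemma permute_list_inv:
  assumes "\<pi> permutes {..<length ys}"
  shows "permute_list (inv \<pi>) (permute_list \<pi> ys) = ys" "permute_list \<pi> (permute_list (inv \<pi>) ys) = ys"
proof -
  have pi': "inv \<pi> permutes {..<length ys}" using assms by (rule permutes_inv)
  have "permute_list (inv \<pi>) (permute_list \<pi> ys) = permute_list (\<pi> \<circ> inv \<pi>) ys"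
    using pi' by (simp add: permute_list_compose)
  also have "\<dots> = ys" using permutes_inv_o(1)[OF assms] by simp
  finally show "permute_list (inv \<pi>) (permute_list \<pi> ys) = ys" .
  have "permute_list \<pi> (permute_list (inv \<pi>) ys) = permute_list (inv \<pi> \<circ> \<pi>) ys"
    using assms by (simp add: permute_list_compose)
  also have "\<dots> = ys" using permutes_inv_o(2)[OF assms] by simp
  finally show "permute_list \<pi> (permute_list (inv \<pi>) ys) = ys" .
qed

lemma sum_permute_list:
  fixes G :: "'a::finite list \<Rightarrow> complex"
  assumes "\<pi> permutes {..<n}"
  shows "(\<Sum>ys\<in>lists_n n. G (permute_list \<pi> ys)) = (\<Sum>zs\<in>lists_n n. G zs)"
proof (rule sum.reindex_bij_witness[where i="permute_list (inv \<pi>)" and j="permute_list \<pi>"])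
  fix a assume "a \<in> lists_n n"
  then have "length a = n" by (simp add: lists_n_def)
  then show "permute_list (inv \<pi>) (permute_list \<pi> a) = a" "permute_list \<pi> a \<in> lists_n n"
    using permute_list_inv assms by (auto simp: lists_n_def)
next
  fix b assume "b \<in> lists_n n"
  then have "length b = n" by (simp add: lists_n_def)
  then show "permute_list \<pi> (permute_list (inv \<pi>) b) = b" "permute_list (inv \<pi>) b \<in> lists_n n"
    using permute_list_inv assms by (auto simp: lists_n_def)
qed simp

lemma kp_permute:
  assumes "\<pi> permutes {..<length xs}" "length ys = length xs"
  shows "kp U (permute_list \<pi> xs) (permute_list \<pi> ys) = kp U xs ys"
proof -
  have "kp U (permute_list \<pi> xs) (permute_list \<pi> ys) = (\<Prod>i<length xs. U (xs ! \<pi> i) (ys ! \<pi> i))"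
  proof -
    have pys: "\<pi> permutes {..<length ys}" using assms by simp
    show ?thesis unfolding kp_def using assms
      by (intro prod.cong refl) (auto simp: permute_list_nth[OF assms(1)] permute_list_nth[OF pys])
  qed
  also have "\<dots> = prod ((\<lambda>i. U (xs!i) (ys!i)) \<circ> \<pi>) {..<length xs}" by (simp add: o_def)
  also have "\<dots> = kp U xs ys" unfolding kp_def by (rule prod.permute[OF assms(1), symmetric])
  finally show ?thesis .
qed

lemma tpw_perm:
  fixes U :: "'a::finite \<Rightarrow> 'a \<Rightarrow> complex"
  assumes pi: "\<pi> permutes {..<n}"
  shows "tpw U n (perm_act n \<pi> f) = perm_act n \<pi> (tpw U n f)"
proof (rule ext)
  fix xs
  show "tpw U n (perm_act n \<pi> f) xs = perm_act n \<pi> (tpw U n f) xs"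
  proof (cases "length xs = n")
    case True
    have "tpw U n (perm_act n \<pi> f) xs = (\<Sum>ys\<in>lists_n n. kp U xs ys * f (permute_list \<pi> ys))"
      using True by (auto simp: tpw_def perm_act_alt lists_n_def intro!: sum.cong)
    also have "\<dots> = (\<Sum>ys\<in>lists_n n. kp U (permute_list \<pi> xs) (permute_list \<pi> ys) * f (permute_list \<pi> ys))"
      using True pi by (intro sum.cong refl) (simp add: kp_permute lists_n_def)
    also have "\<dots> = (\<Sum>zs\<in>lists_n n. kp U (permute_list \<pi> xs) zs * f zs)"
      by (rule sum_permute_list[OF pi, where G="\<lambda>zs. kp U (permute_list \<pi> xs) zs * f zs"])
    also have "\<dots> = perm_act n \<pi> (tpw U n f) xs"
      using True by (simp add: tpw_def perm_act_alt)
    finally show ?thesis .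
  qed (simp add: tpw_def perm_act_alt)
qed

lemma sym_tpw:
  fixes U :: "'a::finite \<Rightarrow> 'a \<Rightarrow> complex"
  assumes "sym_tvec n f"
  shows "sym_tvec n (tpw U n f)"
  using assms unfolding sym_tvec_def by (auto simp: tpw_tvec simp flip: tpw_perm)

lemma sym_mset:
  assumes "sym_tvec n \<Psi>" "mset xs = mset ys"
  shows "\<Psi> xs = \<Psi> ys"
proof (cases "length ys = n")
  case False
  moreover have "length xs = length ys" using assms(2) by (rule mset_eq_length)
  ultimately show ?thesis using assms(1) by (simp add: sym_tvec_def tvec_def)
next
  case True
  obtain p where p: "p permutes {..<length ys}" "permute_list p ys = xs"
    using mset_eq_permutation[OF assms(2)] by blast
  have "perm_act n p \<Psi> = \<Psi>" using assms(1) p(1) True by (simp add: sym_tvec_def)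
  then have "perm_act n p \<Psi> ys = \<Psi> ys" by simp
  then show ?thesis using True p(2) by (simp add: perm_act_alt)
qed

lemma tpw_tens:
  fixes U :: "'a::finite \<Rightarrow> 'a \<Rightarrow> complex"
  shows "tpw U (a+b) (tens a f g) = tens a (tpw U a f) (tpw U b g)"
proof (rule ext)
  fix xs
  show "tpw U (a+b) (tens a f g) xs = tens a (tpw U a f) (tpw U b g) xs"
  proof (cases "length xs = a + b")
    case True
    have "tpw U (a+b) (tens a f g) xs = (\<Sum>zs\<in>lists_n (a+b). kp U xs zs * (f (take a zs) * g (drop a zs)))"
      using True by (simp add: tpw_def tens_def)
    also have "\<dots> = (\<Sum>ps\<in>lists_n a. \<Sum>qs\<in>lists_n b. kp U xs (ps@qs) * (f (take a (ps@qs)) * g (drop a (ps@qs))))"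
      by (rule sum_lists_n_append)
    also have "\<dots> = (\<Sum>ps\<in>lists_n a. \<Sum>qs\<in>lists_n b. kp U xs (ps@qs) * (f ps * g qs))"
      by (intro sum.cong refl) (simp add: lists_n_def)
    also have "\<dots> = (\<Sum>ps\<in>lists_n a. \<Sum>qs\<in>lists_n b. (kp U (take a xs) ps * f ps) * (kp U (drop a xs) qs * g qs))"
    proof (intro sum.cong refl)
      fix ps qs :: "'a list" assume "ps \<in> lists_n a"
      then have "length ps = length (take a xs)" using True by (simp add: lists_n_def)
      then have "kp U (take a xs @ drop a xs) (ps@qs) = kp U (take a xs) ps * kp U (drop a xs) qs"
        by (rule kp_append)
      then show "kp U xs (ps@qs) * (f ps * g qs) = (kp U (take a xs) ps * f ps) * (kp U (drop a xs) qs * g qs)"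
        by (simp add: algebra_simps)
    qed
    also have "\<dots> = tens a (tpw U a f) (tpw U b g) xs"
      using True by (simp add: tens_def tpw_def sum_product)
    finally show ?thesis .
  next
    case False
    then show ?thesis by (auto simp: tpw_def tens_def)
  qed
qed

section \<open>A unitary mapping theta to a basis vector\<close>

lemma sum_delta_mult:
  fixes a :: complex and f :: "'a::finite \<Rightarrow> complex"
  shows "(\<Sum>y\<in>UNIV. (if y = b then a else 0) * f y) = a * f (b::'a::finite)"
  "(\<Sum>y\<in>UNIV. f y * (if y = b then a else 0)) = f b * a"
proof -
  have "(\<Sum>y\<in>UNIV. (if y = b then a else 0) * f y) = (\<Sum>y\<in>UNIV. if y = b then a * f b else 0)" by (rule sum.cong) auto
  then show "(\<Sum>y\<in>UNIV. (if y = b then a else 0) * f y) = a * f (b::'a::finite)" by simp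
  have "(\<Sum>y\<in>UNIV. f y * (if y = b then a else 0)) = (\<Sum>y\<in>UNIV. if y = b then f b * a else 0)" by (rule sum.cong) auto
  then show "(\<Sum>y\<in>UNIV. f y * (if y = b then a else 0)) = f b * a" by simp
qed

lemma householder:
  fixes \<theta> :: "'a::finite \<Rightarrow> complex" and b :: 'a
  assumes th: "unit_vec \<theta>"
  obtains U where "unitary U" "\<And>x. (\<Sum>y\<in>UNIV. U x y * \<theta> y) = (if x = b then 1 else 0)"
proof -
  define s where "s = \<theta> b"
  define r where "r = cmod s"
  define \<phi> where "\<phi> = (if s = 0 then 1 else s / complex_of_real r)"
  have \<phi>1: "cnj \<phi> * \<phi> = 1"
  proof (cases "s = 0")
    case False
    then have "cnj \<phi> * \<phi> = (cnj s * s) / (complex_of_real r * complex_of_real r)"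
      by (simp add: \<phi>_def r_def)
    also have "\<dots> = 1" using False by (simp add: r_def cnj_mult_self power2_eq_square)
    finally show ?thesis .
  qed (simp add: \<phi>_def)
  have \<phi>s: "cnj \<phi> * s = complex_of_real r"
  proof (cases "s = 0")
    case False
    then have "cnj \<phi> * s = (cnj s * s) / complex_of_real r" by (simp add: \<phi>_def r_def)
    also have "\<dots> = complex_of_real r" using False by (simp add: r_def cnj_mult_self power2_eq_square)
    finally show ?thesis .
  qed (simp add: \<phi>_def r_def)
  have s\<phi>: "cnj s * \<phi> = complex_of_real r" using arg_cong[OF \<phi>s, of cnj] by (simp add: mult.commute)
  define t where "t = (\<lambda>x. if x = b then \<phi> else 0)"
  define w where "w = (\<lambda>x. \<theta> x - t x)"
  define N where "N = (\<Sum>y\<in>UNIV. cnj (w y) * w y)"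
  define c where "c = (if N = 0 then 0 else 2 / N)"
  define H where "H = (\<lambda>x y. (if x = y then 1 else 0) - c * (w x * cnj (w y)))"
  define U where "U = (\<lambda>x y. cnj \<phi> * H x y)"
  have \<theta>\<theta>: "(\<Sum>y\<in>UNIV. cnj (\<theta> y) * \<theta> y) = 1" using th by (simp add: unit_vec_def)
  have Nr: "N = complex_of_real (\<Sum>y\<in>UNIV. (cmod (w y))^2)" by (simp add: N_def cnj_mult_self)
  have cc: "cnj c = c" by (simp add: c_def Nr)
  have Hc: "cnj (H y x) = H x y" for x y by (auto simp: H_def cc mult.commute)
  have wth: "(\<Sum>y\<in>UNIV. cnj (w y) * \<theta> y) = 1 - complex_of_real r"
  proof -
    have "(\<Sum>y\<in>UNIV. cnj (w y) * \<theta> y) = (\<Sum>y\<in>UNIV. cnj (\<theta> y) * \<theta> y) - (\<Sum>y\<in>UNIV. cnj (t y) * \<theta> y)"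
      by (simp add: w_def algebra_simps sum_subtractf)
    also have "(\<Sum>y\<in>UNIV. cnj (t y) * \<theta> y) = cnj \<phi> * s"
    proof -
      have "(\<Sum>y\<in>UNIV. cnj (t y) * \<theta> y) = (\<Sum>y\<in>UNIV. if y = b then cnj \<phi> * s else 0)" by (rule sum.cong) (auto simp: t_def s_def)
      then show ?thesis by simp
    qed
    finally show ?thesis using \<theta>\<theta> \<phi>s by simp
  qed
  have Nval: "N = 2 - 2 * complex_of_real r"
  proof -
    have "N = (\<Sum>y\<in>UNIV. cnj (w y) * \<theta> y) - (\<Sum>y\<in>UNIV. cnj (\<theta> y) * t y) + (\<Sum>y\<in>UNIV. cnj (t y) * t y)"
      by (simp add: N_def w_def algebra_simps sum_subtractf sum.distrib)
    also have "(\<Sum>y\<in>UNIV. cnj (\<theta> y) * t y) = cnj s * \<phi>" unfolding t_def s_def by (simp add: sum_delta_mult)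
    also have "(\<Sum>y\<in>UNIV. cnj (t y) * t y) = cnj \<phi> * \<phi>"
    proof -
      have "(\<Sum>y\<in>UNIV. cnj (t y) * t y) = (\<Sum>y\<in>UNIV. if y = b then cnj \<phi> * \<phi> else 0)" by (rule sum.cong) (auto simp: t_def)
      then show ?thesis by simp
    qed
    finally show ?thesis using wth s\<phi> \<phi>1 by simp
  qed
  have key: "c * (1 - complex_of_real r) * w x = w x" for x
  proof (cases "N = 0")
    case True
    then have "(\<Sum>y\<in>UNIV. (cmod (w y))^2) = 0" using Nr by (simp only: of_real_eq_0_iff)
    then have "(cmod (w x))^2 = 0" by (subst (asm) sum_nonneg_eq_0_iff) auto
    then show ?thesis by simp
  next
    case False
    then have "1 - complex_of_real r \<noteq> 0" using Nval by auto
    then have "c * (1 - complex_of_real r) = 1" using False by (simp add: c_def Nval field_simps)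
    then show ?thesis by simp
  qed
  have c2: "c * c * N = 2 * c" by (auto simp: c_def field_simps)
  have HH: "(\<Sum>y\<in>UNIV. H x y * H y z) = (if x = z then 1 else 0)" for x z
  proof -
    have "(\<Sum>y\<in>UNIV. H x y * H y z) = (\<Sum>y\<in>UNIV. (if x = y then 1 else 0) * (if y = z then 1 else 0))
        - c * cnj (w z) * (\<Sum>y\<in>UNIV. (if x = y then 1 else 0) * w y)
        - c * w x * (\<Sum>y\<in>UNIV. (if y = z then 1 else 0) * cnj (w y))
        + c * c * w x * cnj (w z) * N"
      by (simp add: H_def N_def algebra_simps sum.distrib sum_subtractf sum_distrib_left)
    also have "\<dots> = (if x = z then 1 else 0) + w x * cnj (w z) * (c * c * N - 2 * c)"
    proof -
      have d1: "(\<Sum>y\<in>UNIV. (if x = y then 1 else 0) * (if y = z then 1 else 0)) = (if x = z then (1::complex) else 0)"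
      proof -
        have "(\<Sum>y\<in>UNIV. (if x = y then 1 else 0) * (if y = z then 1 else 0)) = (\<Sum>y\<in>UNIV. if y = z then (if x = z then (1::complex) else 0) else 0)"
          by (rule sum.cong) auto
        then show ?thesis by simp
      qed
      have d2: "(\<Sum>y\<in>UNIV. (if x = y then 1 else 0) * w y) = w x"
      proof -
        have "(\<Sum>y\<in>UNIV. (if x = y then 1 else 0) * w y) = (\<Sum>y\<in>UNIV. if y = x then w x else 0)"
          by (rule sum.cong) auto
        then show ?thesis by simp
      qed
      have d3: "(\<Sum>y\<in>UNIV. (if y = z then 1 else 0) * cnj (w y)) = cnj (w z)"
        using sum_delta_mult(1)[of z 1 "\<lambda>y. cnj (w y)"] by simp
      show ?thesis unfolding d1 d2 d3 by (simp add: algebra_simps)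
    qed
    finally show ?thesis using c2 by simp
  qed
  have "unitary U"
    unfolding unitary_def mm_def ust_def U_def
  proof (intro conjI ext)
    fix x z
    have "(\<Sum>y\<in>UNIV. cnj (cnj \<phi> * H y x) * (cnj \<phi> * H y z)) = (cnj \<phi> * \<phi>) * (\<Sum>y\<in>UNIV. H x y * H y z)"
      by (simp add: Hc sum_distrib_left algebra_simps)
    then show "(\<Sum>y\<in>UNIV. cnj (cnj \<phi> * H y x) * (cnj \<phi> * H y z)) = (if x = z then 1 else 0)"
      using \<phi>1 HH by simp
    have "(\<Sum>y\<in>UNIV. cnj \<phi> * H x y * cnj (cnj \<phi> * H z y)) = (cnj \<phi> * \<phi>) * (\<Sum>y\<in>UNIV. H x y * H y z)"
      by (simp add: Hc sum_distrib_left algebra_simps)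
    then show "(\<Sum>y\<in>UNIV. cnj \<phi> * H x y * cnj (cnj \<phi> * H z y)) = (if x = z then 1 else 0)"
      using \<phi>1 HH by simp
  qed
  moreover have "(\<Sum>y\<in>UNIV. U x y * \<theta> y) = (if x = b then 1 else 0)" for x
  proof -
    have e1: "(\<Sum>y\<in>UNIV. U x y * \<theta> y) = (\<Sum>y\<in>UNIV. cnj \<phi> * ((if x = y then 1 else 0) * \<theta> y) - cnj \<phi> * c * w x * (cnj (w y) * \<theta> y))"
      by (rule sum.cong) (auto simp: U_def H_def algebra_simps)
    have d2: "(\<Sum>y\<in>UNIV. (if x = y then 1 else 0) * \<theta> y) = \<theta> x"
    proof -
      have "(\<Sum>y\<in>UNIV. (if x = y then 1 else 0) * \<theta> y) = (\<Sum>y\<in>UNIV. if y = x then \<theta> x else 0)"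
        by (rule sum.cong) auto
      then show ?thesis by simp
    qed
    have "(\<Sum>y\<in>UNIV. U x y * \<theta> y) = cnj \<phi> * (\<theta> x - c * w x * (\<Sum>y\<in>UNIV. cnj (w y) * \<theta> y))"
      unfolding e1 sum_subtractf sum_distrib_left[symmetric] d2 by (simp add: algebra_simps)
    also have "\<dots> = cnj \<phi> * (\<theta> x - w x)"
    proof -
      have k2: "c * w x * (1 - complex_of_real r) = w x" using key[of x] by (metis mult.commute mult.assoc)
      show ?thesis unfolding wth k2 ..
    qed
    also have "\<dots> = (if x = b then 1 else 0)" using \<phi>1 by (simp add: w_def t_def mult.commute)
    finally show ?thesis .
  qed
  ultimately show ?thesis using that by blast
qed

section \<open>The combinatorial estimate\<close>

definition dev :: "'a \<Rightarrow> 'a list \<Rightarrow> nat" where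
  "dev b xs = length (filter (\<lambda>x. x \<noteq> b) xs)"

lemma cnt_dev: "(\<Sum>i<length xs. if xs!i = b then 1 else (0::real)) + real (dev b xs) = real (length xs)"
proof (induction xs)
  case Nil then show ?case by (simp add: dev_def)
next
  case (Cons x xs)
  then show ?case
    by (simp del: sum.lessThan_Suc add: sum.lessThan_Suc_shift dev_def split: if_splits)
qed

lemma sum_ins:
  fixes h :: "'a::finite list \<Rightarrow> real"
  assumes i: "i < Suc l"
  shows "(\<Sum>xs\<in>lists_n (Suc l). if xs!i = b then h xs else 0) = (\<Sum>ys\<in>lists_n l. h (take i ys @ b # drop i ys))"
proof -
  define ins where "ins = (\<lambda>ys::'a list. take i ys @ b # drop i ys)"
  have inj: "inj_on ins (lists_n l)"
  proof (rule inj_onI)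
    fix ys ys' assume ys: "ys \<in> lists_n l" "ys' \<in> lists_n l" and eq: "ins ys = ins ys'"
    have li: "length (take i ys) = i" "length (take i ys') = i" using ys i by (auto simp: lists_n_def)
    have "take i (ins ys) = take i ys" "take i (ins ys') = take i ys'"
      using li by (auto simp: ins_def)
    then have t: "take i ys = take i ys'" using eq by simp
    have "drop (Suc i) (ins ys) = drop i ys" "drop (Suc i) (ins ys') = drop i ys'"
      using li by (auto simp: ins_def)
    then have d: "drop i ys = drop i ys'" using eq by simp
    show "ys = ys'" using t d by (metis append_take_drop_id)
  qed
  have img: "ins ` lists_n l = {xs \<in> lists_n (Suc l). xs!i = b}"
  proof (intro equalityI subsetI)
    fix xs assume "xs \<in> ins ` lists_n l"
    then obtain ys where ys: "ys \<in> lists_n l" "xs = ins ys" by blast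
    have "length (take i ys) = i" using ys i by (auto simp: lists_n_def)
    then show "xs \<in> {xs \<in> lists_n (Suc l). xs!i = b}"
      using ys by (auto simp: ins_def lists_n_def nth_append)
  next
    fix xs assume "xs \<in> {xs \<in> lists_n (Suc l). xs!i = b}"
    then have xs: "length xs = Suc l" "xs!i = b" by (auto simp: lists_n_def)
    define ys where "ys = take i xs @ drop (Suc i) xs"
    have "ys \<in> lists_n l" using xs i by (simp add: ys_def lists_n_def)
    moreover have "ins ys = xs"
    proof -
      have "ins ys = take i xs @ b # drop (Suc i) xs" using xs i by (simp add: ins_def ys_def)
      also have "\<dots> = xs" using xs i id_take_nth_drop[of i xs] by simp
      finally show ?thesis .
    qed
    ultimately show "xs \<in> ins ` lists_n l" by blast
  qed
  have "(\<Sum>xs\<in>lists_n (Suc l). if xs!i = b then h xs else 0) = (\<Sum>xs\<in>{xs \<in> lists_n (Suc l). xs!i = b}. h xs)"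
    by (simp add: sum.inter_filter)
  also have "\<dots> = (\<Sum>ys\<in>lists_n l. h (ins ys))"
    unfolding img[symmetric] by (rule sum.reindex[OF inj, unfolded o_def])
  finally show ?thesis by (simp add: ins_def)
qed

lemma dev_ins: "i \<le> length ys \<Longrightarrow> dev b (take i ys @ b # drop i ys) = dev b ys"
proof -
  have "filter (\<lambda>x. x \<noteq> b) (take i ys @ b # drop i ys) = filter (\<lambda>x. x \<noteq> b) (take i ys) @ filter (\<lambda>x. x \<noteq> b) (drop i ys)"
    by simp
  also have "\<dots> = filter (\<lambda>x. x \<noteq> b) ys" by (metis append_take_drop_id filter_append)
  finally show ?thesis unfolding dev_def by simp
qed

lemma mset_ins: "mset (replicate j b @ take i ys @ b # drop i ys) = mset (replicate (Suc j) b @ ys)"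
proof -
  have td: "mset (take i ys) + mset (drop i ys) = mset ys" by (metis append_take_drop_id mset_append)
  have "mset (replicate j b @ take i ys @ b # drop i ys) = mset (replicate j b) + (mset (take i ys) + mset (drop i ys)) + {#b#}"
    by (simp add: ac_simps)
  also have "\<dots> = mset (replicate (Suc j) b @ ys)" unfolding td by (simp add: ac_simps)
  finally show ?thesis .
qed

lemma dev_step:
  fixes \<Phi> :: "'a::finite list \<Rightarrow> complex" and r :: nat and b :: 'a
  assumes sym: "sym_tvec n \<Phi>" and j: "j < n"
  defines "A \<equiv> \<lambda>j. (\<Sum>xs\<in>lists_n (n-j). if r < dev b xs then (cmod (\<Phi> (replicate j b @ xs)))^2 else 0)"
  shows "real (n-j) * A (Suc j) \<le> (real (n-j) - real (Suc r)) * A j"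
proof -
  define k where "k = n - j"
  define l where "l = n - Suc j"
  have kl: "k = Suc l" using j by (simp add: k_def l_def)
  define g where "g = (\<lambda>xs. (cmod (\<Phi> xs))^2)"
  define cnt where "cnt = (\<lambda>xs::'a list. (\<Sum>i<k. if xs!i = b then 1 else (0::real)))"
  have "(\<Sum>xs\<in>lists_n k. (if r < dev b xs then g (replicate j b @ xs) else 0) * cnt xs)
      = (\<Sum>xs\<in>lists_n k. \<Sum>i<k. if xs!i = b then (if r < dev b xs then g (replicate j b @ xs) else 0) else 0)"
    unfolding cnt_def sum_distrib_left by (intro sum.cong refl) auto
  also have "\<dots> = (\<Sum>i<k. \<Sum>xs\<in>lists_n k. if xs!i = b then (if r < dev b xs then g (replicate j b @ xs) else 0) else 0)"
    by (rule sum.swap)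
  also have "\<dots> = (\<Sum>i<k. A (Suc j))"
  proof (rule sum.cong[OF refl])
    fix i assume "i \<in> {..<k}"
    then have i: "i < Suc l" using kl by simp
    have "(\<Sum>xs\<in>lists_n k. if xs!i = b then (if r < dev b xs then g (replicate j b @ xs) else 0) else 0)
        = (\<Sum>ys\<in>lists_n l. if r < dev b (take i ys @ b # drop i ys) then g (replicate j b @ (take i ys @ b # drop i ys)) else 0)"
      unfolding kl by (rule sum_ins[OF i])
    also have "\<dots> = (\<Sum>ys\<in>lists_n l. if r < dev b ys then g (replicate (Suc j) b @ ys) else 0)"
    proof (rule sum.cong[OF refl])
      fix ys :: "'a list" assume "ys \<in> lists_n l"
      then have "i \<le> length ys" using i by (simp add: lists_n_def)
      moreover have "\<Phi> (replicate j b @ take i ys @ b # drop i ys) = \<Phi> (replicate (Suc j) b @ ys)"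
        by (rule sym_mset[OF sym mset_ins])
      ultimately show "(if r < dev b (take i ys @ b # drop i ys) then g (replicate j b @ (take i ys @ b # drop i ys)) else 0)
          = (if r < dev b ys then g (replicate (Suc j) b @ ys) else 0)"
        by (simp add: dev_ins g_def)
    qed
    also have "\<dots> = A (Suc j)" unfolding A_def g_def l_def by simp
    finally show "(\<Sum>xs\<in>lists_n k. if xs!i = b then (if r < dev b xs then g (replicate j b @ xs) else 0) else 0) = A (Suc j)" .
  qed
  also have "\<dots> = real k * A (Suc j)" by simp
  finally have eq: "real k * A (Suc j) = (\<Sum>xs\<in>lists_n k. (if r < dev b xs then g (replicate j b @ xs) else 0) * cnt xs)" ..
  have "(\<Sum>xs\<in>lists_n k. (if r < dev b xs then g (replicate j b @ xs) else 0) * cnt xs)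
      \<le> (\<Sum>xs\<in>lists_n k. (if r < dev b xs then g (replicate j b @ xs) else 0) * (real k - real (Suc r)))"
  proof (rule sum_mono)
    fix xs :: "'a list" assume "xs \<in> lists_n k"
    then have "length xs = k" by (simp add: lists_n_def)
    then have "cnt xs + real (dev b xs) = real k" using cnt_dev[of xs b] by (simp add: cnt_def)
    then have "r < dev b xs \<Longrightarrow> cnt xs \<le> real k - real (Suc r)" by simp
    then show "(if r < dev b xs then g (replicate j b @ xs) else 0) * cnt xs
        \<le> (if r < dev b xs then g (replicate j b @ xs) else 0) * (real k - real (Suc r))"
      by (auto simp: g_def intro: mult_left_mono)
  qed
  also have "\<dots> = (real k - real (Suc r)) * A j"
    unfolding A_def g_def k_def sum_distrib_left by (intro sum.cong refl) (simp add: mult.commute)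
  finally show ?thesis using eq by (simp add: k_def)
qed

lemma A_nonneg: "0 \<le> (\<Sum>xs\<in>L. if P xs then (cmod (\<Phi> xs))^2 else (0::real))"
  by (rule sum_nonneg) auto

lemma dev_bound:
  fixes \<Phi> :: "'a::finite list \<Rightarrow> complex"
  assumes sym: "sym_tvec n \<Phi>" and mn: "m \<le> n"
  shows "(\<Sum>xs\<in>lists_n (n-m). if r < dev b xs then (cmod (\<Phi> (replicate m b @ xs)))^2 else 0)
         \<le> exp (- (real m * real r) / real n) * (\<Sum>xs\<in>lists_n n. (cmod (\<Phi> xs))^2)"
proof -
  define A where "A = (\<lambda>j. (\<Sum>xs\<in>lists_n (n-j). if r < dev b xs then (cmod (\<Phi> (replicate j b @ xs)))^2 else 0))"
  define q where "q = max 0 (1 - real (Suc r) / real n)"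
  have A0: "0 \<le> A j" for j unfolding A_def by (rule sum_nonneg) auto
  have stepq: "A (Suc j) \<le> q * A j" if "j < n" for j
  proof -
    have st: "real (n-j) * A (Suc j) \<le> (real (n-j) - real (Suc r)) * A j"
      using dev_step[OF sym that, of r b] unfolding A_def by blast
    have kpos: "0 < real (n-j)" using that by simp
    have "A (Suc j) \<le> ((real (n-j) - real (Suc r)) / real (n-j)) * A j"
      using st kpos by (simp add: field_simps)
    also have "\<dots> = (1 - real (Suc r) / real (n-j)) * A j" using kpos by (simp add: field_simps)
    also have "\<dots> \<le> (1 - real (Suc r) / real n) * A j"
    proof (rule mult_right_mono[OF _ A0])
      have "real (Suc r) / real n \<le> real (Suc r) / real (n-j)"
        using kpos by (intro divide_left_mono) auto
      then show "1 - real (Suc r) / real (n - j) \<le> 1 - real (Suc r) / real n" by simp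
    qed
    also have "\<dots> \<le> q * A j" by (rule mult_right_mono[OF _ A0]) (simp add: q_def)
    finally show ?thesis .
  qed
  have iter: "A j \<le> q^j * A 0" if "j \<le> m" for j
    using that
  proof (induction j)
    case 0 then show ?case by simp
  next
    case (Suc j)
    then have "A (Suc j) \<le> q * A j" using mn by (intro stepq) simp
    also have "\<dots> \<le> q * (q^j * A 0)" using Suc by (intro mult_left_mono) (auto simp: q_def)
    finally show ?case by (simp add: mult.assoc)
  qed
  have "A 0 \<le> (\<Sum>xs\<in>lists_n n. (cmod (\<Phi> xs))^2)"
    unfolding A_def by simp (intro sum_mono, auto)
  moreover have "q^m \<le> exp (- (real m * real r) / real n)"
  proof (cases "m = 0")
    case True then show ?thesis by simp
  next
    case False
    then have npos: "0 < real n" using mn by simp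
    define x where "x = real (Suc r) / real n"
    have "q \<le> exp (- real r / real n)"
    proof -
      have e: "1 + - x \<le> exp (- x)" by (rule exp_ge_add_one_self)
      have "- x \<le> - real r / real n" using npos by (simp add: x_def divide_right_mono)
      then have mono: "exp (- x) \<le> exp (- real r / real n)" by (subst exp_le_cancel_iff)
      have q': "q = max 0 (1 - x)" by (simp add: q_def x_def)
      show ?thesis unfolding q'
      proof (rule max.boundedI)
        show "0 \<le> exp (- real r / real n)" by simp
        show "1 - x \<le> exp (- real r / real n)" using e mono by linarith
      qed
    qed
    then have "q^m \<le> exp (- real r / real n) ^ m" by (intro power_mono) (auto simp: q_def)
    also have "\<dots> = exp (real m * (- real r / real n))" by (rule exp_of_nat_mult[symmetric])
    also have "real m * (- real r / real n) = - (real m * real r) / real n" by simp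
    finally show ?thesis .
  qed
  moreover have "0 \<le> q^m" by (simp add: q_def)
  ultimately have "q^m * A 0 \<le> exp (- (real m * real r) / real n) * (\<Sum>xs\<in>lists_n n. (cmod (\<Phi> xs))^2)"
    using A0[of 0] by (intro mult_mono) auto
  then show ?thesis using iter[of m] by (simp add: A_def)
qed

section \<open>Contraction with theta on the first m factors\<close>

definition contr :: "nat \<Rightarrow> ('a \<Rightarrow> complex) \<Rightarrow> ('a list \<Rightarrow> complex) \<Rightarrow> ('a list \<Rightarrow> complex)" where
  "contr m \<theta> \<Psi> = (\<lambda>ys. \<Sum>xs\<in>lists_n m. cnj (tpow \<theta> m xs) * \<Psi> (xs @ ys))"

lemma contr_tvec:
  assumes "tvec n \<Psi>" "m \<le> n"
  shows "tvec (n-m) (contr m \<theta> \<Psi>)"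
  using assms unfolding tvec_def contr_def lists_n_def by auto

lemma tpow_append:
  "length xs = a \<Longrightarrow> length ys = b \<Longrightarrow> tpow \<theta> (a+b) (xs@ys) = tpow \<theta> a xs * tpow \<theta> b ys"
  by (simp add: tpow_def)

lemma tpow_norm:
  fixes \<theta> :: "'a::finite \<Rightarrow> complex"
  assumes "unit_vec \<theta>"
  shows "tinner k (tpow \<theta> k) (tpow \<theta> k) = 1"
proof -
  have "tinner k (tpow \<theta> k) (tpow \<theta> k) = (\<Sum>ys\<in>lists_n k. \<Prod>i<k. cnj (\<theta> (ys!i)) * \<theta> (ys!i))"
    unfolding tinner_def by (intro sum.cong refl) (simp add: tpow_def lists_n_def prod_list_map_nth prod.distrib)
  also have "\<dots> = (\<Prod>i<k. \<Sum>y\<in>UNIV. cnj (\<theta> y) * \<theta> y)" by (rule sum_prod_lists)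
  also have "\<dots> = 1" using assms by (simp add: unit_vec_def)
  finally show ?thesis .
qed

lemma tpow_tvec: "tvec k (tpow \<theta> k)" by (simp add: tvec_def tpow_def)

lemma contr_inner:
  fixes \<Psi> :: "'a::finite list \<Rightarrow> complex"
  assumes "m \<le> n"
  shows "tinner (n-m) (tpow \<theta> (n-m)) (contr m \<theta> \<Psi>) = tinner n (tpow \<theta> n) \<Psi>"
proof -
  define k where "k = n - m"
  have n: "n = m + k" using assms by (simp add: k_def)
  have "tinner k (tpow \<theta> k) (contr m \<theta> \<Psi>) = (\<Sum>ys\<in>lists_n k. \<Sum>xs\<in>lists_n m. cnj (tpow \<theta> (m+k) (xs@ys)) * \<Psi> (xs @ ys))"
    unfolding tinner_def contr_def
    by (intro sum.cong refl) (auto simp: sum_distrib_left tpow_append lists_n_def mult.assoc mult.left_commute intro!: sum.cong)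
  also have "\<dots> = (\<Sum>xs\<in>lists_n m. \<Sum>ys\<in>lists_n k. cnj (tpow \<theta> (m+k) (xs@ys)) * \<Psi> (xs @ ys))"
    by (rule sum.swap)
  also have "\<dots> = tinner n (tpow \<theta> n) \<Psi>"
    unfolding tinner_def n by (rule sum_lists_n_append[symmetric])
  finally show ?thesis by (simp add: k_def)
qed

lemma ptrace_qform:
  fixes \<Psi> :: "'a::finite list \<Rightarrow> complex"
  shows "qform k (ptrace m (proj \<Psi> \<Psi>)) y
    = complex_of_real (\<Sum>ws\<in>lists_n m. (cmod (\<Sum>ys\<in>lists_n k. cnj (y ys) * \<Psi> (ws @ ys)))^2)"
proof -
  define B where "B = (\<lambda>ws. \<Sum>ys\<in>lists_n k. cnj (y ys) * \<Psi> (ws @ ys))"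
  have "qform k (ptrace m (proj \<Psi> \<Psi>)) y = (\<Sum>xs\<in>lists_n k. \<Sum>zs\<in>lists_n k. \<Sum>ws\<in>lists_n m. (cnj (y xs) * \<Psi> (ws @ xs)) * (cnj (\<Psi> (ws @ zs)) * y zs))"
    unfolding qform_def ptrace_def proj_def
    by (simp add: sum_distrib_left sum_distrib_right mult.assoc mult.left_commute)
  also have "\<dots> = (\<Sum>xs\<in>lists_n k. \<Sum>ws\<in>lists_n m. \<Sum>zs\<in>lists_n k. (cnj (y xs) * \<Psi> (ws @ xs)) * (cnj (\<Psi> (ws @ zs)) * y zs))"
    by (rule sum.cong[OF refl], rule sum.swap)
  also have "\<dots> = (\<Sum>ws\<in>lists_n m. \<Sum>xs\<in>lists_n k. \<Sum>zs\<in>lists_n k. (cnj (y xs) * \<Psi> (ws @ xs)) * (cnj (\<Psi> (ws @ zs)) * y zs))"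
    by (rule sum.swap)
  also have "\<dots> = (\<Sum>ws\<in>lists_n m. \<Sum>xs\<in>lists_n k. \<Sum>zs\<in>lists_n k. (cnj (y xs) * \<Psi> (ws @ xs)) * cnj (cnj (y zs) * \<Psi> (ws @ zs)))"
    by (intro sum.cong refl) (simp add: ac_simps)
  also have "\<dots> = (\<Sum>ws\<in>lists_n m. B ws * cnj (B ws))"
    unfolding B_def cnj_sum sum_product ..
  also have "\<dots> = complex_of_real (\<Sum>ws\<in>lists_n m. (cmod (B ws))^2)"
    unfolding of_real_sum by (simp only: complex_norm_square)
  finally show ?thesis by (simp add: B_def)
qed

lemma proj_qform:
  fixes u :: "'a::finite list \<Rightarrow> complex"
  shows "qform k (proj u u) y = complex_of_real ((cmod (tinner k y u))^2)"
proof -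
  have "qform k (proj u u) y = tinner k y u * cnj (tinner k y u)"
    unfolding qform_def proj_def tinner_def by (simp add: sum_product mult.commute mult.left_commute)
  then show ?thesis by (simp only: complex_norm_square)
qed

lemma qform_diff: "qform k (\<lambda>xs ys. C * A xs ys - B xs ys) y = C * qform k A y - qform k B y"
  unfolding qform_def by (simp add: algebra_simps sum_subtractf sum_distrib_left)

lemma contr_inner_y:
  fixes \<Psi> :: "'a::finite list \<Rightarrow> complex"
  shows "tinner k y (contr m \<theta> \<Psi>) = tinner m (tpow \<theta> m) (\<lambda>ws. \<Sum>ys\<in>lists_n k. cnj (y ys) * \<Psi> (ws @ ys))"
proof -
  have "tinner k y (contr m \<theta> \<Psi>) = (\<Sum>ys\<in>lists_n k. \<Sum>ws\<in>lists_n m. cnj (tpow \<theta> m ws) * (cnj (y ys) * \<Psi> (ws @ ys)))"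
    unfolding tinner_def contr_def by (simp add: sum_distrib_left mult.left_commute)
  also have "\<dots> = (\<Sum>ws\<in>lists_n m. \<Sum>ys\<in>lists_n k. cnj (tpow \<theta> m ws) * (cnj (y ys) * \<Psi> (ws @ ys)))"
    by (rule sum.swap)
  also have "\<dots> = tinner m (tpow \<theta> m) (\<lambda>ws. \<Sum>ys\<in>lists_n k. cnj (y ys) * \<Psi> (ws @ ys))"
    unfolding tinner_def by (simp add: sum_distrib_left)
  finally show ?thesis .
qed

lemma part1:
  fixes \<Psi> :: "'a::finite list \<Rightarrow> complex" and \<theta> :: "'a \<Rightarrow> complex"
  assumes u\<Psi>: "unit_tvec n \<Psi>" and u\<theta>: "unit_vec \<theta>" and mn: "m \<le> n"
    and c0: "tinner n \<Psi> (tpow \<theta> n) \<noteq> 0"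
  defines "v \<equiv> contr m \<theta> \<Psi>" and "c \<equiv> tinner n \<Psi> (tpow \<theta> n)"
  defines "N2 \<equiv> Re (tinner (n-m) v v)"
  defines "u \<equiv> (\<lambda>ys. v ys / complex_of_real (sqrt N2))"
  shows "(cmod c)^2 \<le> N2"
    and "op_le (n-m) (proj u u) (\<lambda>xs ys. complex_of_real ((inverse (cmod c))^2) * ptrace m (proj \<Psi> \<Psi>) xs ys)"
proof -
  define k where "k = n - m"
  have "tinner k (tpow \<theta> k) v = cnj c"
    unfolding k_def v_def c_def contr_inner[OF mn] by (rule tinner_cnj)
  moreover have "(cmod (tinner k (tpow \<theta> k) v))^2 \<le> Re (tinner k (tpow \<theta> k) (tpow \<theta> k)) * Re (tinner k v v)"
    by (rule tinner_CS)
  ultimately show cN: "(cmod c)^2 \<le> N2" using tpow_norm[OF u\<theta>] by (simp add: N2_def k_def)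
  have cpos: "0 < (cmod c)^2" using c0 by (simp add: c_def)
  then have Npos: "0 < N2" using cN by linarith
  show "op_le (n-m) (proj u u) (\<lambda>xs ys. complex_of_real ((inverse (cmod c))^2) * ptrace m (proj \<Psi> \<Psi>) xs ys)"
    unfolding op_le_def psd_def
  proof (intro allI impI)
    fix y :: "'a list \<Rightarrow> complex"
    define B where "B = (\<lambda>ws. \<Sum>ys\<in>lists_n (n-m). cnj (y ys) * \<Psi> (ws @ ys))"
    define SB where "SB = (\<Sum>ws\<in>lists_n m. (cmod (B ws))^2)"
    define ic where "ic = (inverse (cmod c))^2"
    have q: "qform (n-m) (\<lambda>xs ys. complex_of_real ic * ptrace m (proj \<Psi> \<Psi>) xs ys - proj u u xs ys) y
        = complex_of_real (ic * SB - (cmod (tinner (n-m) y u))^2)"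
      unfolding qform_diff ptrace_qform proj_qform by (simp add: B_def SB_def)
    have yv: "tinner (n-m) y v = tinner m (tpow \<theta> m) B" unfolding v_def B_def by (rule contr_inner_y)
    have "(cmod (tinner (n-m) y v))^2 \<le> Re (tinner m (tpow \<theta> m) (tpow \<theta> m)) * Re (tinner m B B)"
      unfolding yv by (rule tinner_CS)
    then have yvSB: "(cmod (tinner (n-m) y v))^2 \<le> SB"
      using tpow_norm[OF u\<theta>] by (simp add: SB_def tinner_self_Re)
    have yu: "tinner (n-m) y u = tinner (n-m) y v / complex_of_real (sqrt N2)"
      unfolding u_def tinner_def by (simp add: sum_divide_distrib)
    have "(cmod (tinner (n-m) y u))^2 = (cmod (tinner (n-m) y v))^2 / N2"
      unfolding yu using Npos by (simp add: norm_divide power_divide)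
    also have "\<dots> \<le> SB / N2" using yvSB Npos by (simp add: divide_right_mono)
    also have "\<dots> \<le> SB / (cmod c)^2"
      using cN cpos Npos by (intro divide_left_mono) (auto simp: SB_def intro: sum_nonneg mult_pos_pos)
    also have "\<dots> = ic * SB" by (simp add: ic_def field_simps power_inverse)
    finally have le: "(cmod (tinner (n-m) y u))^2 \<le> ic * SB" .
    show "qform (n-m) (\<lambda>xs ys. complex_of_real ((inverse (cmod c))^2) * ptrace m (proj \<Psi> \<Psi>) xs ys - proj u u xs ys) y \<in> \<real> \<and>
          0 \<le> Re (qform (n-m) (\<lambda>xs ys. complex_of_real ((inverse (cmod c))^2) * ptrace m (proj \<Psi> \<Psi>) xs ys - proj u u xs ys) y)"
      unfolding ic_def[symmetric] q using le by simp
  qed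
qed

lemma lin_span_single: "f \<in> S \<Longrightarrow> f \<in> lin_span S"
  unfolding lin_span_def by (rule CollectI, rule exI[of _ "{f}"], rule exI[of _ "\<lambda>_. 1"]) auto

lemma lin_span_zero: "(\<lambda>xs. 0) \<in> lin_span S"
  unfolding lin_span_def by (rule CollectI, rule exI[of _ "{}"]) auto

lemma sum_if_subset:
  assumes "finite A" "B \<subseteq> A"
  shows "(\<Sum>w\<in>A. if w \<in> B then h w else 0) = (\<Sum>w\<in>B. h w)"
proof -
  have "(\<Sum>w\<in>A. if w \<in> B then h w else 0) = sum h {w \<in> A. w \<in> B}"
    using assms by (simp add: sum.inter_filter)
  also have "{w \<in> A. w \<in> B} = B" using assms by auto
  finally show ?thesis .
qed

lemma lin_span_add:
  assumes "f \<in> lin_span S" "g \<in> lin_span S"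
  shows "(\<lambda>xs. a * f xs + g xs) \<in> lin_span S"
proof -
  obtain F1 c1 where F1: "finite F1" "F1 \<subseteq> S" "f = (\<lambda>xs. \<Sum>w\<in>F1. c1 w * w xs)"
    using assms(1) unfolding lin_span_def by blast
  obtain F2 c2 where F2: "finite F2" "F2 \<subseteq> S" "g = (\<lambda>xs. \<Sum>w\<in>F2. c2 w * w xs)"
    using assms(2) unfolding lin_span_def by blast
  define c where "c = (\<lambda>w. a * (if w \<in> F1 then c1 w else 0) + (if w \<in> F2 then c2 w else 0))"
  have "(\<lambda>xs. a * f xs + g xs) = (\<lambda>xs. \<Sum>w\<in>F1 \<union> F2. c w * w xs)"
  proof (rule ext)
    fix xs
    have cw: "c w * w xs = a * (if w \<in> F1 then c1 w * w xs else 0) + (if w \<in> F2 then c2 w * w xs else 0)" for w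
      by (auto simp: c_def algebra_simps)
    have "(\<Sum>w\<in>F1 \<union> F2. c w * w xs) = a * (\<Sum>w\<in>F1 \<union> F2. if w \<in> F1 then c1 w * w xs else 0)
        + (\<Sum>w\<in>F1 \<union> F2. if w \<in> F2 then c2 w * w xs else 0)"
      unfolding cw by (simp add: sum.distrib sum_distrib_left)
    also have "\<dots> = a * f xs + g xs"
      using F1 F2 by (simp add: sum_if_subset)
    finally show "a * f xs + g xs = (\<Sum>w\<in>F1 \<union> F2. c w * w xs)" by simp
  qed
  then show ?thesis unfolding lin_span_def using F1 F2 by blast
qed

lemma lin_span_sum:
  assumes "finite J" "\<forall>j\<in>J. F j \<in> lin_span S"
  shows "(\<lambda>xs. \<Sum>j\<in>J. c j * F j xs) \<in> lin_span S"
  using assms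
proof (induction J rule: finite_induct)
  case empty then show ?case by (simp add: lin_span_zero)
next
  case (insert j J)
  then have "(\<lambda>xs. c j * F j xs + (\<Sum>j\<in>J. c j * F j xs)) \<in> lin_span S"
    by (intro lin_span_add) auto
  then show ?case using insert by simp
qed

section \<open>Basis vectors with few deviations lie in V\<close>

lemma tpow_delta: "tpow (\<lambda>x. if x = b then 1 else 0) l ws = (if ws = replicate l b then 1 else 0)"
proof (induction ws arbitrary: l)
  case Nil then show ?case by (cases l) (auto simp: tpow_def)
next
  case (Cons w ws)
  show ?case
  proof (cases l)
    case 0 then show ?thesis by (simp add: tpow_def)
  next
    case (Suc l')
    have "tpow (\<lambda>x. if x = b then 1 else 0) l (w # ws) = (if w = b then 1 else 0) * tpow (\<lambda>x. if x = b then 1 else 0) l' ws"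
      using Suc by (simp add: tpow_def)
    then show ?thesis using Cons[of l'] Suc by auto
  qed
qed

lemma mset_split_b: "mset xs = mset (filter (\<lambda>y. b = y) xs) + mset (filter (\<lambda>x. x \<noteq> b) xs)"
  by (induction xs) auto

lemma ev_in_Vset:
  fixes U :: "'a::finite \<Rightarrow> 'a \<Rightarrow> complex"
  assumes Uth: "\<And>x. (\<Sum>y\<in>UNIV. ust U x y * (if y = b then 1 else 0)) = \<theta> x"
    and xs: "length xs = k" "dev b xs \<le> r" and rk: "r \<le> k"
  shows "tpw (ust U) k (\<lambda>ys. if ys = xs then 1 else 0) \<in> Vset \<theta> k r"
proof -
  define cb where "cb = length (filter (\<lambda>y. b = y) xs)"
  have "length (filter (\<lambda>y. b = y) xs) + length (filter (\<lambda>x. x \<noteq> b) xs) = length xs"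
    by (induction xs) auto
  then have cbk: "cb + dev b xs = k" using xs unfolding cb_def dev_def by simp
  define zs where "zs = replicate (cb - (k - r)) b @ filter (\<lambda>x. x \<noteq> b) xs"
  have lz: "length zs = r" using cbk xs rk by (simp add: zs_def dev_def[symmetric])
  define ys where "ys = replicate (k - r) b @ zs"
  have kc: "(k - r) + (cb - (k - r)) = cb" using cbk xs rk by simp
  have ys_eq: "ys = filter (\<lambda>y. b = y) xs @ filter (\<lambda>x. x \<noteq> b) xs"
    unfolding ys_def zs_def append_assoc[symmetric] replicate_add[symmetric] unfolding kc
    unfolding cb_def replicate_length_filter ..
  have myx: "mset ys = mset xs" unfolding ys_eq mset_append using mset_split_b[of xs b] by (rule sym)
  obtain p where p: "p permutes {..<length xs}" "permute_list p xs = ys"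
    using mset_eq_permutation[OF myx] by blast
  have pk: "p permutes {..<k}" using p xs by simp
  have c1: "(\<lambda>ws. if ws = xs then (1::complex) else 0) = perm_act k p (\<lambda>ws. if ws = ys then 1 else 0)"
  proof (rule ext)
    fix ws :: "'a list"
    show "(if ws = xs then 1 else 0) = perm_act k p (\<lambda>ws. if ws = ys then 1 else 0) ws"
    proof (cases "length ws = k")
      case True
      have "permute_list p ws = ys \<longleftrightarrow> ws = xs"
      proof
        assume "permute_list p ws = ys"
        then have "permute_list (inv p) (permute_list p ws) = permute_list (inv p) (permute_list p xs)"
          using p by simp
        then show "ws = xs" using permute_list_inv(1) p True xs by metis
      qed (use p in simp)
      then show ?thesis using True by (simp add: perm_act_alt)
    next
      case False then show ?thesis using xs by (auto simp: perm_act_alt)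
    qed
  qed
  have c2: "(\<lambda>ws. if ws = ys then (1::complex) else 0)
      = tens (k - r) (tpow (\<lambda>x. if x = b then 1 else 0) (k - r)) (\<lambda>ws. if ws = zs then 1 else 0)"
  proof (rule ext)
    fix ws :: "'a list"
    have "ws = ys \<longleftrightarrow> take (k - r) ws = replicate (k - r) b \<and> drop (k - r) ws = zs"
    proof
      assume "ws = ys" then show "take (k - r) ws = replicate (k - r) b \<and> drop (k - r) ws = zs"
        by (simp add: ys_def)
    next
      assume "take (k - r) ws = replicate (k - r) b \<and> drop (k - r) ws = zs"
      then show "ws = ys" unfolding ys_def by (metis append_take_drop_id)
    qed
    then show "(if ws = ys then 1 else 0) = tens (k - r) (tpow (\<lambda>x. if x = b then 1 else 0) (k - r)) (\<lambda>ws. if ws = zs then 1 else 0) ws"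
      by (simp add: tens_def tpow_delta)
  qed
  have kk: "k = (k - r) + r" using rk by simp
  have th: "(\<lambda>x. \<Sum>y\<in>UNIV. ust U x y * (if y = b then 1 else 0)) = \<theta>" using Uth by (rule ext)
  have "tpw (ust U) k (\<lambda>ys. if ys = xs then 1 else 0)
      = perm_act k p (tpw (ust U) k (tens (k - r) (tpow (\<lambda>x. if x = b then 1 else 0) (k - r)) (\<lambda>ws. if ws = zs then 1 else 0)))"
    unfolding c1 c2 tpw_perm[OF pk] ..
  also have "tpw (ust U) k (tens (k - r) (tpow (\<lambda>x. if x = b then 1 else 0) (k - r)) (\<lambda>ws. if ws = zs then 1 else 0))
      = tens (k - r) (tpow \<theta> (k - r)) (tpw (ust U) r (\<lambda>ws. if ws = zs then 1 else 0))"
    by (subst kk, subst tpw_tens) (simp add: tpw_tpow th)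
  finally show ?thesis unfolding Vset_def using pk tpw_tvec by blast
qed

lemma span_from_basis:
  fixes U :: "'a::finite \<Rightarrow> 'a \<Rightarrow> complex"
  assumes Uth: "\<And>x. (\<Sum>y\<in>UNIV. ust U x y * (if y = b then 1 else 0)) = \<theta> x"
    and tw: "tvec k w'" and wdev: "\<And>ys. r < dev b ys \<Longrightarrow> w' ys = 0" and rk: "r \<le> k"
  shows "tpw (ust U) k w' \<in> lin_span (Vset \<theta> k r)"
proof -
  define L where "L = {xs \<in> lists_n k. dev b xs \<le> r}"
  have fL: "finite L" by (simp add: L_def)
  have wsum: "w' = (\<lambda>ys. \<Sum>xs\<in>L. w' xs * (\<lambda>xs ys. if ys = xs then 1 else 0) xs ys)"
  proof (rule ext)
    fix ys
    have "(\<Sum>xs\<in>L. w' xs * (if ys = xs then 1 else 0)) = (\<Sum>xs\<in>L. if xs = ys then w' ys else 0)"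
      by (rule sum.cong) auto
    also have "\<dots> = w' ys"
      using fL tw wdev by (auto simp: L_def lists_n_def tvec_def not_le)
    finally show "w' ys = (\<Sum>xs\<in>L. w' xs * (\<lambda>xs ys. if ys = xs then 1 else 0) xs ys)" by simp
  qed
  have "tpw (ust U) k w' = (\<lambda>ys. \<Sum>xs\<in>L. w' xs * tpw (ust U) k ((\<lambda>xs ys. if ys = xs then 1 else 0) xs) ys)"
    by (subst wsum, rule tpw_lin[OF fL])
  also have "\<dots> \<in> lin_span (Vset \<theta> k r)"
  proof (rule lin_span_sum[OF fL], intro ballI)
    fix xs assume "xs \<in> L"
    then have l: "length xs = k" and d: "dev b xs \<le> r" by (auto simp: L_def lists_n_def)
    have "tpw (ust U) k (\<lambda>ys. if ys = xs then 1 else 0) \<in> Vset \<theta> k r"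
      by (rule ev_in_Vset[OF Uth l d rk])
    then show "tpw (ust U) k ((\<lambda>xs ys. if ys = xs then 1 else 0) xs) \<in> lin_span (Vset \<theta> k r)"
      by (simp add: lin_span_single)
  qed
  finally show ?thesis .
qed

lemma perm_act_scale: "perm_act n \<pi> (\<lambda>xs. c * f xs) = (\<lambda>xs. c * perm_act n \<pi> f xs)"
  unfolding perm_act_def by auto

lemma sym_scale: "sym_tvec k f \<Longrightarrow> sym_tvec k (\<lambda>xs. c * f xs)"
  unfolding sym_tvec_def tvec_def by (simp add: perm_act_scale)

lemma sym_tpow: "sym_tvec k (tpow \<theta> k)"
  unfolding sym_tvec_def
proof (intro conjI allI impI)
  show "tvec k (tpow \<theta> k)" by (rule tpow_tvec)
  fix \<pi> assume pi: "\<pi> permutes {..<k}"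
  show "perm_act k \<pi> (tpow \<theta> k) = tpow \<theta> k"
  proof (rule ext)
    fix xs
    show "perm_act k \<pi> (tpow \<theta> k) xs = tpow \<theta> k xs"
    proof (cases "length xs = k")
      case True
      then have "mset (permute_list \<pi> xs) = mset xs" using pi by (simp add: mset_permute_list)
      then have "prod_list (map \<theta> (permute_list \<pi> xs)) = prod_list (map \<theta> xs)"
        by (metis mset_map prod_mset_prod_list)
      then show ?thesis using True by (simp add: perm_act_alt tpow_def)
    qed (simp add: perm_act_alt tpow_def)
  qed
qed

lemma perm_act_id: "tvec k f \<Longrightarrow> perm_act k id f = f"
  unfolding perm_act_alt tvec_def by (intro ext) auto

lemma tens_tpow: "r \<le> k \<Longrightarrow> tens (k - r) (tpow \<theta> (k - r)) (tpow \<theta> r) = tpow \<theta> k"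
proof (rule ext)
  fix xs assume rk: "r \<le> k"
  show "tens (k - r) (tpow \<theta> (k - r)) (tpow \<theta> r) xs = tpow \<theta> k xs"
  proof (cases "length xs = k")
    case True
    have "prod_list (map \<theta> (take (k - r) xs)) * prod_list (map \<theta> (drop (k - r) xs)) = prod_list (map \<theta> xs)"
      by (metis append_take_drop_id map_append prod_list.append)
    then show ?thesis using True rk by (simp add: tens_def tpow_def)
  next
    case False then show ?thesis using rk by (auto simp: tens_def tpow_def)
  qed
qed

lemma tpow_in_almost_power:
  assumes "r \<le> k"
  shows "tpow \<theta> k \<in> almost_power \<theta> k r"
proof -
  have "perm_act k id (tens (k - r) (tpow \<theta> (k - r)) (tpow \<theta> r)) = tpow \<theta> k"
    unfolding tens_tpow[OF assms] by (rule perm_act_id[OF tpow_tvec])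
  then have "\<exists>\<pi> \<psi>. tpow \<theta> k = perm_act k \<pi> (tens (k - r) (tpow \<theta> (k - r)) \<psi>) \<and> \<pi> permutes {..<k} \<and> tvec r \<psi>"
    by (intro exI[of _ id] exI[of _ "tpow \<theta> r"]) (simp add: permutes_id tpow_tvec)
  then have "tpow \<theta> k \<in> Vset \<theta> k r" unfolding Vset_def by blast
  then show ?thesis unfolding almost_power_def using sym_tpow lin_span_single by blast
qed

lemma dev_mset: "dev b xs = size (filter_mset (\<lambda>x. x \<noteq> b) (mset xs))"
  unfolding dev_def by (metis mset_filter size_mset)

lemma tinner_div:
  "tinner k (\<lambda>ys. f ys / complex_of_real a) (\<lambda>ys. g ys / complex_of_real a') = tinner k f g / complex_of_real (a * a')"
  unfolding tinner_def by (simp add: sum_divide_distrib)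

lemma final_real:
  fixes X E C :: real
  assumes "X \<le> E / C^2" "0 < C" "0 \<le> E"
  shows "2 * sqrt X \<le> 2 * sqrt 2 * inverse C * sqrt E"
proof -
  have "sqrt X \<le> sqrt (E / C^2)" using assms(1) by (rule real_sqrt_le_mono)
  also have "\<dots> = sqrt E / C" using assms(2) by (simp add: real_sqrt_divide)
  also have "\<dots> \<le> sqrt 2 * (sqrt E / C)"
  proof -
    have a: "1 \<le> sqrt (2::real)" by simp
    have b: "0 \<le> sqrt E / C" using assms by simp
    show ?thesis using mult_right_mono[OF a b] by simp
  qed
  finally have h: "sqrt X \<le> sqrt 2 * (sqrt E / C)" .
  have "2 * sqrt 2 * inverse C * sqrt E = 2 * (sqrt 2 * (sqrt E / C))" by (simp add: divide_inverse ac_simps)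
  then show ?thesis using h by linarith
qed

lemma sqrt_exp_half: "sqrt (exp (- (a * b) / c)) = exp (- (a * b) / (2 * c))"
proof -
  have "exp (- (a * b) / c) = exp (- (a * b) / (2 * c)) * exp (- (a * b) / (2 * c))"
    by (simp add: exp_add[symmetric])
  then show ?thesis by simp
qed

lemma kp_rep:
  fixes U :: "'a \<Rightarrow> 'a \<Rightarrow> complex"
  assumes Ub: "\<And>y. U b y = cnj (\<theta> y)" and l: "length ws = m"
  shows "kp U (replicate m b) ws = cnj (tpow \<theta> m ws)"
  using l by (simp add: kp_def tpow_def prod_list_map_nth Ub)

theorem lemma2:
  fixes \<Psi> :: "'a::finite list \<Rightarrow> complex" and \<theta> :: "'a \<Rightarrow> complex" and n m :: nat
  assumes "unit_tvec n \<Psi>"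
    and "sym_tvec n \<Psi>"
    and "unit_vec \<theta>"
    and "tinner n \<Psi> (tpow \<theta> n) \<noteq> 0"
    and "m \<le> n"
  shows "\<exists>\<Psi>nm. unit_tvec (n - m) \<Psi>nm \<and>
           op_le (n - m) (proj \<Psi>nm \<Psi>nm)
             (\<lambda>xs ys. complex_of_real ((inverse (cmod (tinner n \<Psi> (tpow \<theta> n)))) ^ 2)
                        * ptrace m (proj \<Psi> \<Psi>) xs ys) \<and>
           (\<forall>r \<le> n - m. \<exists>\<Psi>nmr. \<Psi>nmr \<in> almost_power \<theta> (n - m) r \<and> unit_tvec (n - m) \<Psi>nmr \<and>
              trace_norm (n - m) (\<lambda>xs ys. proj \<Psi>nm \<Psi>nm xs ys - proj \<Psi>nmr \<Psi>nmr xs ys)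
                \<le> 2 * sqrt 2 * inverse (cmod (tinner n \<Psi> (tpow \<theta> n)))
                   * exp (- (real m * real r) / (2 * real n)))"
proof -
  define c where "c = tinner n \<Psi> (tpow \<theta> n)"
  define v where "v = contr m \<theta> \<Psi>"
  define N2 where "N2 = Re (tinner (n-m) v v)"
  define u where "u = (\<lambda>ys. v ys / complex_of_real (sqrt N2))"
  note p1 = part1[OF assms(1) assms(3) assms(5) assms(4)]
  have cN: "(cmod c)^2 \<le> N2" using p1(1) unfolding c_def N2_def v_def .
  have ole: "op_le (n-m) (proj u u) (\<lambda>xs ys. complex_of_real ((inverse (cmod c))^2) * ptrace m (proj \<Psi> \<Psi>) xs ys)"
    using p1(2) unfolding c_def N2_def v_def u_def .
  have cpos: "0 < cmod c" using assms(4) by (simp add: c_def)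
  have Npos: "0 < N2" using cN cpos by (smt (verit) zero_less_power)
  have t\<Psi>: "tvec n \<Psi>" and \<Psi>\<Psi>: "tinner n \<Psi> \<Psi> = 1" using assms(1) by (auto simp: unit_tvec_def)
  have tv: "tvec (n-m) v" using contr_tvec[OF t\<Psi> assms(5)] by (simp add: v_def)
  have vv: "tinner (n-m) v v = complex_of_real N2" by (simp add: N2_def tinner_self)
  have uu: "unit_tvec (n-m) u"
  proof -
    have "tinner (n-m) u u = tinner (n-m) v v / complex_of_real (sqrt N2 * sqrt N2)"
      unfolding u_def by (rule tinner_div)
    also have "\<dots> = 1" using Npos by (simp add: vv)
    finally show ?thesis using tv by (simp add: unit_tvec_def tvec_def u_def)
  qed
  define b :: 'a where "b = undefined"
  obtain U where U: "unitary U" and Uth: "\<And>x. (\<Sum>y\<in>UNIV. U x y * \<theta> y) = (if x = b then 1 else 0)"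
    using householder[OF assms(3), of b] by blast
  have Ub: "U b y = cnj (\<theta> y)" for y
  proof -
    have d: "(\<Sum>x\<in>UNIV. cnj (U x y) * U x z) = (if y = z then 1 else 0)" for z
      using fun_cong[OF fun_cong[OF conjunct1[OF U[unfolded unitary_def]]], of y z] by (simp add: mm_def ust_def)
    have "\<theta> y = (\<Sum>z\<in>UNIV. (if y = z then 1 else 0) * \<theta> z)"
    proof -
      have "(\<Sum>z\<in>UNIV. (if y = z then 1 else 0) * \<theta> z) = (\<Sum>z\<in>UNIV. if z = y then \<theta> y else 0)"
        by (rule sum.cong) auto
      then show ?thesis by simp
    qed
    also have "\<dots> = (\<Sum>z\<in>UNIV. \<Sum>x\<in>UNIV. cnj (U x y) * U x z * \<theta> z)"
      by (simp add: d[symmetric] sum_distrib_right)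
    also have "\<dots> = (\<Sum>x\<in>UNIV. cnj (U x y) * (\<Sum>z\<in>UNIV. U x z * \<theta> z))"
      by (subst sum.swap) (simp add: sum_distrib_left mult.assoc)
    also have "\<dots> = (\<Sum>x\<in>UNIV. (if x = b then 1 else 0) * cnj (U x y))"
      unfolding Uth by (simp add: mult.commute)
    also have "\<dots> = cnj (U b y)" by (simp add: sum_delta_mult)
    finally show ?thesis by simp
  qed
  have Uth': "\<And>x. (\<Sum>y\<in>UNIV. ust U x y * (if y = b then 1 else 0)) = \<theta> x"
    by (simp add: ust_def sum_delta_mult Ub)
  define \<Psi>' where "\<Psi>' = tpw U n \<Psi>"
  have sym\<Psi>': "sym_tvec n \<Psi>'" unfolding \<Psi>'_def by (rule sym_tpw[OF assms(2)])
  have n\<Psi>': "(\<Sum>zs\<in>lists_n n. (cmod (\<Psi>' zs))^2) = 1"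
  proof -
    have "tinner n \<Psi>' \<Psi>' = 1" unfolding \<Psi>'_def tpw_inner[OF U t\<Psi>] by (rule \<Psi>\<Psi>)
    then have "Re (tinner n \<Psi>' \<Psi>') = 1" by simp
    then show ?thesis by (simp only: tinner_self_Re)
  qed
  define v' where "v' = tpw U (n-m) v"
  have tv': "tvec (n-m) v'" by (simp add: v'_def tpw_tvec)
  have v'eq: "v' ys = \<Psi>' (replicate m b @ ys)" for ys
  proof (cases "length ys = n - m")
    case True
    have "\<Psi>' (replicate m b @ ys) = (\<Sum>zs\<in>lists_n n. kp U (replicate m b @ ys) zs * \<Psi> zs)"
      using True assms(5) by (simp add: \<Psi>'_def tpw_def)
    also have "\<dots> = (\<Sum>ws\<in>lists_n m. \<Sum>ps\<in>lists_n (n-m). kp U (replicate m b @ ys) (ws@ps) * \<Psi> (ws@ps))"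
      using sum_lists_n_append[where a=m and b="n-m" and g="\<lambda>zs. kp U (replicate m b @ ys) zs * \<Psi> zs"] assms(5) by simp
    also have "\<dots> = (\<Sum>ws\<in>lists_n m. \<Sum>ps\<in>lists_n (n-m). kp U ys ps * (cnj (tpow \<theta> m ws) * \<Psi> (ws@ps)))"
    proof (intro sum.cong refl)
      fix ws ps :: "'a list" assume "ws \<in> lists_n m"
      then have l: "length ws = m" by (simp add: lists_n_def)
      then have "kp U (replicate m b @ ys) (ws@ps) = kp U (replicate m b) ws * kp U ys ps"
        by (intro kp_append) simp
      then show "kp U (replicate m b @ ys) (ws@ps) * \<Psi> (ws@ps) = kp U ys ps * (cnj (tpow \<theta> m ws) * \<Psi> (ws@ps))"
        using kp_rep[where U=U and b=b and \<theta>=\<theta>, OF Ub l] by simp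
    qed
    also have "\<dots> = (\<Sum>ps\<in>lists_n (n-m). \<Sum>ws\<in>lists_n m. kp U ys ps * (cnj (tpow \<theta> m ws) * \<Psi> (ws@ps)))"
      by (rule sum.swap)
    also have "\<dots> = v' ys"
      using True by (simp add: v'_def v_def tpw_def contr_def sum_distrib_left)
    finally show ?thesis ..
  next
    case False
    then have "length (replicate m b @ ys) \<noteq> n" using assms(5) by simp
    then show ?thesis using False by (simp add: v'_def \<Psi>'_def tpw_def)
  qed
  have v'v': "Re (tinner (n-m) v' v') = N2"
    unfolding v'_def tpw_inner[OF U tv] N2_def ..
  have allr: "\<forall>r \<le> n - m. \<exists>\<Psi>nmr. \<Psi>nmr \<in> almost_power \<theta> (n - m) r \<and> unit_tvec (n - m) \<Psi>nmr \<and>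
              trace_norm (n - m) (\<lambda>xs ys. proj u u xs ys - proj \<Psi>nmr \<Psi>nmr xs ys)
                \<le> 2 * sqrt 2 * inverse (cmod c) * exp (- (real m * real r) / (2 * real n))"
  proof (intro allI impI)
    fix r assume r: "r \<le> n - m"
    define Am where "Am = (\<Sum>ys\<in>lists_n (n-m). if r < dev b ys then (cmod (\<Psi>' (replicate m b @ ys)))^2 else 0)"
    have Am_le: "Am \<le> exp (- (real m * real r) / real n)"
      using dev_bound[OF sym\<Psi>' assms(5), of r b] n\<Psi>' by (simp add: Am_def)
    have Am0: "0 \<le> Am" unfolding Am_def by (rule sum_nonneg) auto
    define w' where "w' = (\<lambda>ys. if dev b ys \<le> r then v' ys else 0)"
    define M2 where "M2 = (\<Sum>ys\<in>lists_n (n-m). if dev b ys \<le> r then (cmod (v' ys))^2 else 0)"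
    have M20: "0 \<le> M2" unfolding M2_def by (rule sum_nonneg) auto
    have NMA: "N2 = M2 + Am"
    proof -
      have "N2 = (\<Sum>ys\<in>lists_n (n-m). (cmod (v' ys))^2)" using v'v' by (simp add: tinner_self_Re)
      also have "\<dots> = (\<Sum>ys\<in>lists_n (n-m). (if dev b ys \<le> r then (cmod (v' ys))^2 else 0) + (if r < dev b ys then (cmod (\<Psi>' (replicate m b @ ys)))^2 else 0))"
        by (intro sum.cong refl) (auto simp: v'eq)
      also have "\<dots> = M2 + Am" by (simp add: M2_def Am_def sum.distrib)
      finally show ?thesis .
    qed
    have tw': "tvec (n-m) w'" using tv' by (simp add: tvec_def w'_def)
    have ww: "tinner (n-m) w' w' = complex_of_real M2"
    proof -
      have "tinner (n-m) w' w' = (\<Sum>ys\<in>lists_n (n-m). complex_of_real (if dev b ys \<le> r then (cmod (v' ys))^2 else 0))"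
        unfolding tinner_def by (intro sum.cong refl) (simp add: w'_def cnj_mult_self)
      then show ?thesis by (simp add: M2_def)
    qed
    have vw: "tinner (n-m) v' w' = complex_of_real M2"
    proof -
      have "tinner (n-m) v' w' = (\<Sum>ys\<in>lists_n (n-m). complex_of_real (if dev b ys \<le> r then (cmod (v' ys))^2 else 0))"
        unfolding tinner_def by (intro sum.cong refl) (simp add: w'_def cnj_mult_self)
      then show ?thesis by (simp add: M2_def)
    qed
    have symw': "sym_tvec (n-m) w'"
      unfolding sym_tvec_def
    proof (intro conjI allI impI)
      show "tvec (n-m) w'" by (rule tw')
      fix \<pi> assume pi: "\<pi> permutes {..<n-m}"
      show "perm_act (n-m) \<pi> w' = w'"
      proof (rule ext)
        fix ys :: "'a list"
        show "perm_act (n-m) \<pi> w' ys = w' ys"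
        proof (cases "length ys = n - m")
          case True
          then have ms: "mset (permute_list \<pi> ys) = mset ys" using pi by (simp add: mset_permute_list)
          then have "dev b (permute_list \<pi> ys) = dev b ys" by (simp add: dev_mset)
          moreover have "v' (permute_list \<pi> ys) = v' ys"
            unfolding v'eq by (rule sym_mset[OF sym\<Psi>']) (simp add: ms)
          ultimately show ?thesis using True by (simp add: perm_act_alt w'_def)
        next
          case False then show ?thesis using tw' by (simp add: perm_act_alt tvec_def)
        qed
      qed
    qed
    have key: "\<exists>\<Psi>r. \<Psi>r \<in> almost_power \<theta> (n - m) r \<and> unit_tvec (n - m) \<Psi>r \<and>
        1 - (cmod (tinner (n-m) u \<Psi>r))^2 \<le> Am / N2"
    proof (cases "M2 = 0")
      case True
      then have "Am / N2 = 1" using NMA Npos by simp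
      moreover have "unit_tvec (n-m) (tpow \<theta> (n-m))"
        using tpow_norm[OF assms(3)] tpow_tvec by (simp add: unit_tvec_def)
      ultimately show ?thesis using tpow_in_almost_power[OF r] by (intro exI[of _ "tpow \<theta> (n-m)"]) simp
    next
      case False
      then have Mpos: "0 < M2" using M20 by simp
      define wn where "wn = (\<lambda>ys. w' ys / complex_of_real (sqrt M2))"
      have wn': "wn = (\<lambda>ys. inverse (complex_of_real (sqrt M2)) * w' ys)"
        by (simp add: wn_def divide_inverse mult.commute)
      have twn: "tvec (n-m) wn" using tw' by (simp add: tvec_def wn_def)
      have symwn: "sym_tvec (n-m) wn" unfolding wn' by (rule sym_scale[OF symw'])
      have wnwn: "tinner (n-m) wn wn = 1"
        unfolding wn_def tinner_div ww using Mpos by simp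
      define \<Psi>r where "\<Psi>r = tpw (ust U) (n-m) wn"
      have t\<Psi>r: "tvec (n-m) \<Psi>r" by (simp add: \<Psi>r_def tpw_tvec)
      have u\<Psi>r: "unit_tvec (n-m) \<Psi>r"
        using tpw_inner[OF unitary_ust[OF U] twn] wnwn t\<Psi>r by (simp add: unit_tvec_def \<Psi>r_def)
      have ap: "\<Psi>r \<in> almost_power \<theta> (n-m) r"
        unfolding almost_power_def
      proof
        show "\<Psi>r \<in> {\<phi>. sym_tvec (n - m) \<phi>}" unfolding \<Psi>r_def using sym_tpw[OF symwn] by simp
        show "\<Psi>r \<in> lin_span (Vset \<theta> (n - m) r)" unfolding \<Psi>r_def
          by (rule span_from_basis[OF Uth' twn _ r]) (simp add: wn_def w'_def)
      qed
      have Uu: "tpw U (n-m) u = (\<lambda>ys. v' ys / complex_of_real (sqrt N2))"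
      proof -
        have "u = (\<lambda>ys. inverse (complex_of_real (sqrt N2)) * v ys)" by (simp add: u_def divide_inverse mult.commute)
        then have "tpw U (n-m) u = (\<lambda>ys. inverse (complex_of_real (sqrt N2)) * v' ys)"
          by (simp only: tpw_scale v'_def)
        then show ?thesis by (simp add: divide_inverse mult.commute)
      qed
      have U\<Psi>r: "tpw U (n-m) \<Psi>r = wn" unfolding \<Psi>r_def by (rule tpw_inv(2)[OF U twn])
      have ov: "tinner (n-m) u \<Psi>r = complex_of_real (M2 / (sqrt N2 * sqrt M2))"
      proof -
        have "tinner (n-m) u \<Psi>r = tinner (n-m) (tpw U (n-m) u) (tpw U (n-m) \<Psi>r)"
          by (rule tpw_inner[OF U t\<Psi>r, symmetric])
        also have "\<dots> = tinner (n-m) v' w' / complex_of_real (sqrt N2 * sqrt M2)"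
          unfolding Uu U\<Psi>r wn_def by (rule tinner_div)
        finally show ?thesis by (simp add: vw)
      qed
      have x: "cmod (tinner (n-m) u \<Psi>r) = M2 / (sqrt N2 * sqrt M2)"
        unfolding ov norm_of_real using Mpos Npos by simp
      have "(M2 / (sqrt N2 * sqrt M2))^2 = M2 / N2"
        using Mpos Npos by (simp add: power_divide power_mult_distrib) (simp add: power2_eq_square field_simps)
      then have "(cmod (tinner (n-m) u \<Psi>r))^2 = M2 / N2" unfolding x .
      then have "1 - (cmod (tinner (n-m) u \<Psi>r))^2 = Am / N2"
        using NMA Npos by (simp add: field_simps)
      then show ?thesis using ap u\<Psi>r by auto
    qed
    then obtain \<Psi>r where ap: "\<Psi>r \<in> almost_power \<theta> (n - m) r" and u\<Psi>r: "unit_tvec (n - m) \<Psi>r"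
      and X: "1 - (cmod (tinner (n-m) u \<Psi>r))^2 \<le> Am / N2" by blast
    have "Am / N2 \<le> exp (- (real m * real r) / real n) / N2"
      using Am_le Npos by (simp add: divide_right_mono)
    also have "\<dots> \<le> exp (- (real m * real r) / real n) / (cmod c)^2"
      using cN cpos Npos by (intro divide_left_mono) (auto intro: mult_pos_pos)
    finally have X2: "1 - (cmod (tinner (n-m) u \<Psi>r))^2 \<le> exp (- (real m * real r) / real n) / (cmod c)^2"
      using X by linarith
    have "trace_norm (n - m) (\<lambda>xs ys. proj u u xs ys - proj \<Psi>r \<Psi>r xs ys) = 2 * sqrt (1 - (cmod (tinner (n-m) u \<Psi>r))^2)"
      by (rule trace_norm_pure[OF uu u\<Psi>r])
    also have "\<dots> \<le> 2 * sqrt 2 * inverse (cmod c) * sqrt (exp (- (real m * real r) / real n))"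
      by (rule final_real[OF X2 cpos]) simp
    also have "sqrt (exp (- (real m * real r) / real n)) = exp (- (real m * real r) / (2 * real n))"
      by (rule sqrt_exp_half)
    finally have bnd: "trace_norm (n - m) (\<lambda>xs ys. proj u u xs ys - proj \<Psi>r \<Psi>r xs ys)
        \<le> 2 * sqrt 2 * inverse (cmod c) * exp (- (real m * real r) / (2 * real n))" .
    show "\<exists>\<Psi>nmr. \<Psi>nmr \<in> almost_power \<theta> (n - m) r \<and> unit_tvec (n - m) \<Psi>nmr \<and>
              trace_norm (n - m) (\<lambda>xs ys. proj u u xs ys - proj \<Psi>nmr \<Psi>nmr xs ys)
                \<le> 2 * sqrt 2 * inverse (cmod c) * exp (- (real m * real r) / (2 * real n))"
      using ap u\<Psi>r bnd by blast
  qed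
  show ?thesis
    apply (rule exI[of _ u])
    using uu ole allr unfolding c_def by blast
qed

end
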